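(* Let $H_0,H_1$ be complex Hilbert spaces, $G$ a densely defined closed operator from $H_0$ into $H_1$ and $D$ a densely defined closed operator from $H_1$ into $H_0$ with $-G^*\subset D$. Let $a\in\mathcal{L}(H_1)$ and $m\in\mathcal{L}(H_0)$ be coercive, and let $\Lambda\colon \mathrm{BD}(G)\to\mathrm{BD}(D)$ be the Dirichlet-to-Neumann operator associated with $-DaG+m$. Then $\Lambda$ is bounded and invertible. Moreover, \[ \Lambda u_0=\begin{pmatrix}0 & \pi_{\mathrm{BD}(D)}\end{pmatrix}\begin{pmatrix} m & -D\\ -\mathring{G} & a^{-1}\end{pmatrix}^{-1}\begin{pmatrix}-m\\ G\end{pmatrix}u_0 \] for all $u_0\in\mathrm{BD}(G)$, and \[ \Lambda^{-1} q_0=\begin{pmatrix}\pi_{\mathrm{BD}(G)} & 0\end{pmatrix}\begin{pmatrix} m & -\mathring{D}\\ -G & a^{-1}\end{pmatrix}^{-1}\begin{pmatrix}D\\ -a^{-1}\end{pmatrix}q_0 \] for all $q_0\in\mathrm{BD}(D)$. Here the first matrix operator acts in $H_0\times H_1$ with domain $\mathrm{dom}(\mathring G)\times\mathrm{dom}(D)$ and the second with domain $\mathrm{dom}(G)\times\mathrm{dom}(\mathring D)$; both are invertible.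
   Context: Put $\mathring D=-G^*$ and $\mathring G=-D^*$ (so $\mathring G\subset G$, $\mathring D\subset D$). The domain of an operator is equipped with its graph inner product, e.g. $(u,v)_{\mathrm{dom}(G)}=(u,v)_{H_0}+(Gu,Gv)_{H_1}$. $\mathrm{BD}(G)$ is the orthogonal complement of $\mathrm{dom}(\mathring G)$ in $\mathrm{dom}(G)$ (with respect to the graph inner product), and $\mathrm{BD}(D)$ the orthogonal complement of $\mathrm{dom}(\mathring D)$ in $\mathrm{dom}(D)$; they carry the induced inner products, and $\pi_{\mathrm{BD}(G)}\colon\mathrm{dom}(G)\to\mathrm{BD}(G)$, $\pi_{\mathrm{BD}(D)}\colon\mathrm{dom}(D)\to\mathrm{BD}(D)$ are the orthogonal projections. A bounded operator $M$ on a Hilbert space is coercive if there is $\mu>0$ with $\mathrm{Re}(Mx,x)\ge\mu\|x\|^2$ for all $x$. $\mathrm{dom}(DaG)=\{u\in\mathrm{dom}(G): aGu\in\mathrm{dom}(D)\}$. For coercive $a,m$ and $u_0\in\mathrm{BD}(G)$ there is a unique $u\in\mathrm{dom}(DaG)$ with $mu-DaGu=0$ and $u-u_0\in\mathrm{dom}(\mathring G)$; the Dirichlet-to-Neumann operator associated with $-DaG+m$ is defined by $\Lambda u_0=\pi_{\mathrm{BD}(D)}(aGu)$. *)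

theory Defs
  imports "HOL-Analysis.Analysis"
begin

class complex_vec = real_vector +
  fixes scaleC :: "complex \<Rightarrow> 'a \<Rightarrow> 'a" (infixr \<open>*\<^sub>C\<close> 75)
  assumes scaleC_add_right: "c *\<^sub>C (x + y) = c *\<^sub>C x + c *\<^sub>C y"
    and scaleC_add_left: "(c + d) *\<^sub>C x = c *\<^sub>C x + d *\<^sub>C x"
    and scaleC_scaleC: "c *\<^sub>C (d *\<^sub>C x) = (c * d) *\<^sub>C x"
    and scaleC_one: "1 *\<^sub>C x = x"
    and scaleR_scaleC: "r *\<^sub>R x = complex_of_real r *\<^sub>C x"

class chilbert = complex_vec + real_normed_vector + complete_space +
  fixes cinner :: "'a \<Rightarrow> 'a \<Rightarrow> complex"
  assumes cinner_add_left: "cinner (x + y) z = cinner x z + cinner y z"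
    and cinner_scaleC_left: "cinner (c *\<^sub>C x) y = c * cinner x y"
    and cinner_commute: "cinner x y = cnj (cinner y x)"
    and cinner_self_norm: "cinner x x = complex_of_real ((norm x)\<^sup>2)"

definition lin_op :: "('a::chilbert \<times> 'b::chilbert) set \<Rightarrow> bool" where
  "lin_op A \<longleftrightarrow> (0, 0) \<in> A
     \<and> (\<forall>x y u v. (x, y) \<in> A \<longrightarrow> (u, v) \<in> A \<longrightarrow> (x + u, y + v) \<in> A)
     \<and> (\<forall>c x y. (x, y) \<in> A \<longrightarrow> (c *\<^sub>C x, c *\<^sub>C y) \<in> A)
     \<and> (\<forall>y. (0, y) \<in> A \<longrightarrow> y = 0)"

text \<open>domain of an operator: Domain A (the relational domain of the graph)\<close>

definition op_app :: "('a \<times> 'b) set \<Rightarrow> 'a \<Rightarrow> 'b" where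
  "op_app A x = (THE y. (x, y) \<in> A)"

definition densely_defined :: "('a::chilbert \<times> 'b::chilbert) set \<Rightarrow> bool" where
  "densely_defined A \<longleftrightarrow> closure (Domain A) = UNIV"

definition closed_op :: "('a::chilbert \<times> 'b::chilbert) set \<Rightarrow> bool" where
  "closed_op A \<longleftrightarrow> lin_op A \<and> closed A"

definition adj :: "('a::chilbert \<times> 'b::chilbert) set \<Rightarrow> ('b \<times> 'a) set" where
  "adj A = {(y, z). \<forall>x w. (x, w) \<in> A \<longrightarrow> cinner w y = cinner x z}"

definition neg_op :: "('a \<times> 'b::ab_group_add) set \<Rightarrow> ('a \<times> 'b) set" where
  "neg_op A = {(x, - y) | x y. (x, y) \<in> A}"

definition ringD :: "('a::chilbert \<times> 'b::chilbert) set \<Rightarrow> ('b \<times> 'a) set" where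
  "ringD G = neg_op (adj G)"

definition ringG :: "('b::chilbert \<times> 'a::chilbert) set \<Rightarrow> ('a \<times> 'b) set" where
  "ringG D = neg_op (adj D)"

definition graph_inner :: "('a::chilbert \<times> 'b::chilbert) set \<Rightarrow> 'a \<Rightarrow> 'a \<Rightarrow> complex" where
  "graph_inner A u v = cinner u v + cinner (op_app A u) (op_app A v)"

definition graph_norm :: "('a::chilbert \<times> 'b::chilbert) set \<Rightarrow> 'a \<Rightarrow> real" where
  "graph_norm A u = sqrt ((norm u)\<^sup>2 + (norm (op_app A u))\<^sup>2)"

definition BD :: "('a::chilbert \<times> 'b::chilbert) set \<Rightarrow> ('a \<times> 'b) set \<Rightarrow> 'a set" where
  "BD A A0 = {u \<in> Domain A. \<forall>v \<in> Domain A0. graph_inner A v u = 0}"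

definition proj_BD :: "('a::chilbert \<times> 'b::chilbert) set \<Rightarrow> ('a \<times> 'b) set \<Rightarrow> 'a \<Rightarrow> 'a" where
  "proj_BD A A0 u = (THE w. w \<in> BD A A0 \<and> (\<forall>v \<in> BD A A0. graph_inner A (u - w) v = 0))"

definition bounded_clop :: "('a::chilbert \<Rightarrow> 'b::chilbert) \<Rightarrow> bool" where
  "bounded_clop f \<longleftrightarrow> (\<forall>x y. f (x + y) = f x + f y) \<and> (\<forall>c x. f (c *\<^sub>C x) = c *\<^sub>C f x)
     \<and> (\<exists>K. \<forall>x. norm (f x) \<le> K * norm x)"

definition coercive :: "('a::chilbert \<Rightarrow> 'a) \<Rightarrow> bool" where
  "coercive f \<longleftrightarrow> (\<exists>\<mu>>0. \<forall>x. Re (cinner (f x) x) \<ge> \<mu> * (norm x)\<^sup>2)"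

definition dtn_sol :: "('a::chilbert \<times> 'b::chilbert) set \<Rightarrow> ('b \<times> 'a) set
    \<Rightarrow> ('b \<Rightarrow> 'b) \<Rightarrow> ('a \<Rightarrow> 'a) \<Rightarrow> 'a \<Rightarrow> 'a" where
  "dtn_sol G D a m u0 = (THE u. u \<in> Domain G \<and> a (op_app G u) \<in> Domain D
       \<and> m u - op_app D (a (op_app G u)) = 0 \<and> u - u0 \<in> Domain (ringG D))"

definition DtN :: "('a::chilbert \<times> 'b::chilbert) set \<Rightarrow> ('b \<times> 'a) set
    \<Rightarrow> ('b \<Rightarrow> 'b) \<Rightarrow> ('a \<Rightarrow> 'a) \<Rightarrow> 'a \<Rightarrow> 'b" where
  "DtN G D a m u0 = proj_BD D (ringD G) (a (op_app G (dtn_sol G D a m u0)))"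

text \<open>(m, -D; -ring-G, a^-1) with domain dom(ring-G) x dom(D)\<close>
definition mat1 :: "('a::chilbert \<times> 'b::chilbert) set \<Rightarrow> ('b \<times> 'a) set
    \<Rightarrow> ('b \<Rightarrow> 'b) \<Rightarrow> ('a \<Rightarrow> 'a) \<Rightarrow> 'a \<times> 'b \<Rightarrow> 'a \<times> 'b" where
  "mat1 G D a m p = (m (fst p) - op_app D (snd p),
                     - op_app (ringG D) (fst p) + inv a (snd p))"

text \<open>(m, -ring-D; -G, a^-1) with domain dom(G) x dom(ring-D)\<close>
definition mat2 :: "('a::chilbert \<times> 'b::chilbert) set \<Rightarrow> ('b \<times> 'a) set
    \<Rightarrow> ('b \<Rightarrow> 'b) \<Rightarrow> ('a \<Rightarrow> 'a) \<Rightarrow> 'a \<times> 'b \<Rightarrow> 'a \<times> 'b" where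
  "mat2 G D a m p = (m (fst p) - op_app (ringD G) (snd p),
                     - op_app G (fst p) + inv a (snd p))"

end

theory Submission
  imports Defs "HOL-Analysis.Analysis"
begin


lemma scaleC_zero_right[simp]: "c *\<^sub>C (0::'a::complex_vec) = 0"
proof -
  have "c *\<^sub>C (0::'a) = c *\<^sub>C (0 + 0)" by simp
  also have "\<dots> = c *\<^sub>C 0 + c *\<^sub>C 0" by (rule scaleC_add_right)
  finally show ?thesis by simp
qed

lemma scaleC_zero_left[simp]: "0 *\<^sub>C (x::'a::complex_vec) = 0"
proof -
  have "0 *\<^sub>C x = (0 + 0) *\<^sub>C x" by simp
  also have "\<dots> = 0 *\<^sub>C x + 0 *\<^sub>C x" by (rule scaleC_add_left)
  finally show ?thesis by simp
qed

lemma scaleC_minus_right: "c *\<^sub>C (- x) = - (c *\<^sub>C (x::'a::complex_vec))"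
proof -
  have "c *\<^sub>C (- x) + c *\<^sub>C x = c *\<^sub>C (- x + x)" by (rule scaleC_add_right[symmetric])
  also have "\<dots> = 0" by simp
  finally show ?thesis by (simp add: eq_neg_iff_add_eq_0)
qed

lemma scaleC_minus_left: "(- c) *\<^sub>C x = - (c *\<^sub>C (x::'a::complex_vec))"
proof -
  have "(- c) *\<^sub>C x + c *\<^sub>C x = (- c + c) *\<^sub>C x" by (rule scaleC_add_left[symmetric])
  also have "\<dots> = 0" by simp
  finally show ?thesis by (simp add: eq_neg_iff_add_eq_0)
qed

lemma scaleC_diff_right: "c *\<^sub>C (x - y) = c *\<^sub>C x - c *\<^sub>C (y::'a::complex_vec)"
  by (simp only: diff_conv_add_uminus scaleC_add_right scaleC_minus_right)

lemma scaleC_of_real: "complex_of_real r *\<^sub>C x = r *\<^sub>R (x::'a::complex_vec)"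
  by (rule scaleR_scaleC[symmetric])

lemma cinner_zero_left[simp]: "cinner 0 y = 0"
proof -
  have "cinner 0 y = cinner (0 + 0) y" by simp
  also have "\<dots> = cinner 0 y + cinner 0 y" by (rule cinner_add_left)
  finally show ?thesis by simp
qed

lemma cinner_minus_left: "cinner (- x) y = - cinner x y"
proof -
  have "cinner (- x) y + cinner x y = cinner (- x + x) y" by (rule cinner_add_left[symmetric])
  also have "\<dots> = 0" by simp
  finally show ?thesis by (simp add: eq_neg_iff_add_eq_0)
qed

lemma cinner_diff_left: "cinner (x - y) z = cinner x z - cinner y z"
  by (simp only: diff_conv_add_uminus cinner_add_left cinner_minus_left)

lemma cinner_add_right: "cinner z (x + y) = cinner z x + cinner z y"
proof -
  have "cinner z (x + y) = cnj (cinner (x + y) z)" by (rule cinner_commute)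
  also have "\<dots> = cnj (cinner x z) + cnj (cinner y z)" by (simp only: cinner_add_left complex_cnj_add)
  also have "\<dots> = cinner z x + cinner z y" by (simp only: cinner_commute[of z x] cinner_commute[of z y])
  finally show ?thesis .
qed

lemma cinner_zero_right[simp]: "cinner x 0 = 0"
  by (subst cinner_commute) simp

lemma cinner_minus_right: "cinner x (- y) = - cinner x y"
  by (subst cinner_commute, subst cinner_minus_left, subst cinner_commute[of x y]) simp

lemma cinner_diff_right: "cinner x (y - z) = cinner x y - cinner x z"
  by (simp only: diff_conv_add_uminus cinner_add_right cinner_minus_right)

lemma cinner_scaleC_right: "cinner x (c *\<^sub>C y) = cnj c * cinner x y"
  by (subst cinner_commute, subst cinner_scaleC_left, subst cinner_commute[of x y]) simp

lemma cinner_scaleR_left: "cinner (r *\<^sub>R x) y = complex_of_real r * cinner x y"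
  by (simp only: scaleR_scaleC cinner_scaleC_left)

lemma Re_cinner_sym: "Re (cinner x y) = Re (cinner y x)"
  by (subst cinner_commute) simp

lemma Re_cinner_self: "Re (cinner x x) = (norm x)\<^sup>2"
  by (simp add: cinner_self_norm)

lemma cinner_eq_from_Re:
  assumes "Re (cinner x y) = Re (cinner x' y')"
    and "Re (cinner (\<i> *\<^sub>C x) y) = Re (cinner (\<i> *\<^sub>C x') y')"
  shows "cinner x y = cinner x' y'"
  using assms by (simp add: cinner_scaleC_left complex_eq_iff)

section \<open>Real Hilbert space structure\<close>

definition rsubspace :: "'v::real_vector set \<Rightarrow> bool" where
  "rsubspace M \<longleftrightarrow> 0 \<in> M \<and> (\<forall>x\<in>M. \<forall>y\<in>M. x + y \<in> M) \<and> (\<forall>r. \<forall>x\<in>M. r *\<^sub>R x \<in> M)"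

lemma rsubspace_diff: "rsubspace M \<Longrightarrow> x \<in> M \<Longrightarrow> y \<in> M \<Longrightarrow> x - y \<in> M"
  unfolding rsubspace_def by (metis diff_conv_add_uminus scaleR_minus1_left)

locale rhs =
  fixes ip :: "'v::{real_normed_vector,complete_space} \<Rightarrow> 'v \<Rightarrow> real"
  assumes ip_sym: "ip x y = ip y x"
    and ip_add: "ip (x + y) z = ip x z + ip y z"
    and ip_scale: "ip (r *\<^sub>R x) y = r * ip x y"
    and ip_self: "ip x x = (norm x)\<^sup>2"
begin

lemma ip_add_right: "ip z (x + y) = ip z x + ip z y"
  by (simp only: ip_sym[of z] ip_add)

lemma ip_scale_right: "ip y (r *\<^sub>R x) = r * ip y x"
  by (simp only: ip_sym[of y] ip_scale)

lemma ip_zero_left[simp]: "ip 0 y = 0"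
proof -
  have "ip 0 y = ip (0 *\<^sub>R 0) y" by simp
  also have "\<dots> = 0" by (subst ip_scale) simp
  finally show ?thesis .
qed

lemma ip_zero_right[simp]: "ip y 0 = 0"
  by (simp only: ip_sym[of y] ip_zero_left)

lemma ip_minus_left: "ip (- x) y = - ip x y"
proof -
  have "ip (- x) y = ip ((-1) *\<^sub>R x) y" by simp
  also have "\<dots> = - ip x y" by (subst ip_scale) simp
  finally show ?thesis .
qed

lemma ip_minus_right: "ip y (- x) = - ip y x"
  by (simp only: ip_sym[of y] ip_minus_left)

lemma ip_diff_left: "ip (x - y) z = ip x z - ip y z"
  by (simp only: diff_conv_add_uminus ip_add ip_minus_left)

lemma ip_diff_right: "ip z (x - y) = ip z x - ip z y"
  by (simp only: ip_sym[of z] ip_diff_left)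

lemma norm_diff_sq: "(norm (x - y))\<^sup>2 = (norm x)\<^sup>2 - 2 * ip x y + (norm y)\<^sup>2"
proof -
  have "(norm (x - y))\<^sup>2 = ip (x - y) (x - y)" by (simp add: ip_self)
  also have "\<dots> = ip x x - ip x y - ip y x + ip y y"
    by (simp add: ip_diff_left ip_diff_right)
  finally show ?thesis by (simp add: ip_self ip_sym[of y x])
qed

lemma norm_add_sq: "(norm (x + y))\<^sup>2 = (norm x)\<^sup>2 + 2 * ip x y + (norm y)\<^sup>2"
  using norm_diff_sq[of x "- y"] by (simp add: ip_minus_right)

lemma cs: "\<bar>ip x y\<bar> \<le> norm x * norm y"
proof (cases "y = 0")
  case True then show ?thesis by simp
next
  case False
  hence ny: "(norm y)\<^sup>2 > 0" by simp
  define t where "t = ip x y / (norm y)\<^sup>2"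
  have "0 \<le> (norm (x - t *\<^sub>R y))\<^sup>2" by simp
  also have "\<dots> = (norm x)\<^sup>2 - 2 * t * ip x y + t\<^sup>2 * (norm y)\<^sup>2"
    by (simp add: norm_diff_sq ip_scale_right power_mult_distrib)
  also have "\<dots> = (norm x)\<^sup>2 - (ip x y)\<^sup>2 / (norm y)\<^sup>2"
    using ny by (simp add: t_def field_simps power2_eq_square)
  finally have "(ip x y)\<^sup>2 \<le> (norm x)\<^sup>2 * (norm y)\<^sup>2"
    using ny by (simp add: field_simps)
  hence "(ip x y)\<^sup>2 \<le> (norm x * norm y)\<^sup>2" by (simp add: power_mult_distrib)
  thus ?thesis by (metis abs_le_square_iff abs_of_nonneg mult_nonneg_nonneg norm_ge_zero)
qed

lemma parallelogram: fixes u v :: 'v shows "(norm (u + v))\<^sup>2 + (norm (u - v))\<^sup>2 = 2 * (norm u)\<^sup>2 + 2 * (norm v)\<^sup>2"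
  using norm_add_sq[of u v] norm_diff_sq[of u v] by linarith

lemma min_point:
  fixes x :: 'v
  assumes sub: "rsubspace M" and cl: "closed M"
  shows "\<exists>p\<in>M. \<forall>y\<in>M. (norm (x - p))\<^sup>2 \<le> (norm (x - y))\<^sup>2"
proof -
  define S where "S = (\<lambda>y. norm (x - y)) ` M"
  define d where "d = Inf S"
  have S0: "S \<noteq> {}" using sub by (auto simp: S_def rsubspace_def)
  have bdd: "bdd_below S" unfolding S_def by (rule bdd_belowI[of _ 0]) auto
  have dle: "d \<le> norm (x - y)" if "y \<in> M" for y
    unfolding d_def using that bdd by (auto simp: S_def intro!: cInf_lower)
  have d0: "0 \<le> d" unfolding d_def by (rule cInf_greatest[OF S0]) (auto simp: S_def)
  have "\<exists>y\<in>M. (norm (x - y))\<^sup>2 < d\<^sup>2 + inverse (real (Suc n))" for n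
  proof -
    define A where "A = d\<^sup>2 + inverse (real (Suc n))"
    have A0: "0 \<le> A" by (simp add: A_def)
    have "sqrt (d\<^sup>2) < sqrt A" unfolding A_def by (subst real_sqrt_less_iff) simp
    hence "d < sqrt A" using d0 by simp
    then obtain s where "s \<in> S" "s < sqrt A"
      using cInf_lessD[OF S0] unfolding d_def by blast
    then obtain y where y: "y \<in> M" "norm (x - y) < sqrt A"
      by (auto simp: S_def)
    have "(norm (x - y))\<^sup>2 < (sqrt A)\<^sup>2" by (rule power_strict_mono) (use y in auto)
    hence "(norm (x - y))\<^sup>2 < A" using A0 by simp
    hence "(norm (x - y))\<^sup>2 < d\<^sup>2 + inverse (real (Suc n))" by (simp add: A_def)
    with y show ?thesis by blast
  qed
  hence "\<forall>n. \<exists>y. y \<in> M \<and> (norm (x - y))\<^sup>2 < d\<^sup>2 + inverse (real (Suc n))" by blast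
  from choice[OF this] obtain Y where Y': "\<forall>n. Y n \<in> M \<and> (norm (x - Y n))\<^sup>2 < d\<^sup>2 + inverse (real (Suc n))"
    by blast
  hence Y: "\<And>n. Y n \<in> M" "\<And>n. (norm (x - Y n))\<^sup>2 < d\<^sup>2 + inverse (real (Suc n))" by auto
  have par: "(norm (Y n - Y k))\<^sup>2 \<le> 2 * inverse (real (Suc n)) + 2 * inverse (real (Suc k))" for n k
  proof -
    have mid: "inverse 2 *\<^sub>R (Y n + Y k) \<in> M" using Y(1) sub by (simp add: rsubspace_def)
    have "2 * d \<le> 2 * norm (x - inverse 2 *\<^sub>R (Y n + Y k))" using dle[OF mid] by simp
    also have "2 * norm (x - inverse 2 *\<^sub>R (Y n + Y k)) = norm ((x - Y n) + (x - Y k))"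
    proof -
      have "(x - Y n) + (x - Y k) = 2 *\<^sub>R (x - inverse 2 *\<^sub>R (Y n + Y k))"
        by (simp add: algebra_simps scaleR_2)
      thus ?thesis by simp
    qed
    finally have h: "2 * d \<le> norm ((x - Y n) + (x - Y k))" .
    have "(2 * d)\<^sup>2 \<le> (norm ((x - Y n) + (x - Y k)))\<^sup>2"
      by (rule power_mono[OF h]) (use d0 in simp)
    moreover have "(norm ((x - Y n) + (x - Y k)))\<^sup>2 + (norm ((x - Y n) - (x - Y k)))\<^sup>2
        = 2 * (norm (x - Y n))\<^sup>2 + 2 * (norm (x - Y k))\<^sup>2" using parallelogram[of "x - Y n" "x - Y k"] by simp
    moreover have "(x - Y n) - (x - Y k) = Y k - Y n" by simp
    moreover have "norm (Y k - Y n) = norm (Y n - Y k)" by (rule norm_minus_commute)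
    ultimately show ?thesis using Y(2)[of n] Y(2)[of k] by (simp add: power_mult_distrib)
  qed
  have "Cauchy Y"
  proof (rule CauchyI)
    fix e :: real assume e: "0 < e"
    obtain N :: nat where N: "4 / e\<^sup>2 < real N" using reals_Archimedean2 by blast
    have "\<forall>m\<ge>N. \<forall>n\<ge>N. norm (Y m - Y n) < e"
    proof (intro allI impI)
      fix m n assume mn: "N \<le> m" "N \<le> n"
      have "inverse (real (Suc m)) < e\<^sup>2 / 4"
      proof -
        have "4 / e\<^sup>2 < real (Suc m)" using N mn by simp
        thus ?thesis using e by (simp add: field_simps)
      qed
      moreover have "inverse (real (Suc n)) < e\<^sup>2 / 4"
      proof -
        have "4 / e\<^sup>2 < real (Suc n)" using N mn by simp
        thus ?thesis using e by (simp add: field_simps)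
      qed
      ultimately have "(norm (Y m - Y n))\<^sup>2 < e\<^sup>2" using par[of m n] by simp
      thus "norm (Y m - Y n) < e" using e by (simp add: power_less_imp_less_base less_le)
    qed
    thus "\<exists>M. \<forall>m\<ge>M. \<forall>n\<ge>M. norm (Y m - Y n) < e" by blast
  qed
  then obtain p where p: "Y \<longlonglongrightarrow> p" using Cauchy_convergent convergent_def by blast
  have pM: "p \<in> M" using cl Y(1) p closed_sequential_limits by blast
  have lim1: "(\<lambda>n. (norm (x - Y n))\<^sup>2) \<longlonglongrightarrow> (norm (x - p))\<^sup>2"
    by (intro tendsto_intros p)
  have lim2: "(\<lambda>n. d\<^sup>2 + inverse (real (Suc n))) \<longlonglongrightarrow> d\<^sup>2 + 0"
    by (intro tendsto_intros LIMSEQ_inverse_real_of_nat)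
  have "(norm (x - p))\<^sup>2 \<le> d\<^sup>2 + 0"
    by (rule LIMSEQ_le[OF lim1 lim2]) (use Y(2) less_imp_le in blast)
  hence "(norm (x - p))\<^sup>2 \<le> (norm (x - y))\<^sup>2" if "y \<in> M" for y
  proof -
    have "d\<^sup>2 \<le> (norm (x - y))\<^sup>2" by (rule power_mono[OF dle[OF that] d0])
    thus ?thesis using \<open>(norm (x - p))\<^sup>2 \<le> d\<^sup>2 + 0\<close> by linarith
  qed
  with pM show ?thesis by blast
qed

lemma proj_exists:
  assumes sub: "rsubspace M" and cl: "closed M"
  shows "\<exists>p\<in>M. \<forall>y\<in>M. ip (x - p) y = 0"
proof -
  obtain p where pM: "p \<in> M" and pmin: "\<And>y. y \<in> M \<Longrightarrow> (norm (x - p))\<^sup>2 \<le> (norm (x - y))\<^sup>2"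
    using min_point[OF sub cl] by blast
  have "ip (x - p) y = 0" if yM: "y \<in> M" for y
  proof (rule ccontr)
    define c where "c = ip (x - p) y"
    define s where "s = (norm y)\<^sup>2"
    assume "ip (x - p) y \<noteq> 0"
    hence c0: "c \<noteq> 0" by (simp add: c_def)
    define t where "t = c / (s + 1)"
    have s0: "0 \<le> s" by (simp add: s_def)
    have "p + t *\<^sub>R y \<in> M" using sub pM yM by (simp add: rsubspace_def)
    from pmin[OF this] have "(norm (x - p))\<^sup>2 \<le> (norm ((x - p) - t *\<^sub>R y))\<^sup>2"
      by (simp add: algebra_simps)
    also have "\<dots> = (norm (x - p))\<^sup>2 - 2 * t * c + t\<^sup>2 * s"
      by (simp add: norm_diff_sq ip_scale_right c_def s_def power_mult_distrib)
    finally have "2 * t * c \<le> t\<^sup>2 * s" by simp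
    hence "2 * t * c * (s + 1)\<^sup>2 \<le> t\<^sup>2 * s * (s + 1)\<^sup>2" by (rule mult_right_mono) simp
    moreover have s1: "s + 1 \<noteq> 0" using s0 by simp
    moreover have "2 * t * c * (s + 1)\<^sup>2 = 2 * c * c * (s + 1)"
      using s1 by (simp add: t_def power2_eq_square)
    moreover have "t\<^sup>2 * s * (s + 1)\<^sup>2 = c * c * s"
      using s1 by (simp add: t_def power2_eq_square)
    ultimately have "2 * c * c * (s + 1) \<le> c * c * s" by simp
    hence "(c * c) * (2 * (s + 1)) \<le> (c * c) * s" by (simp add: algebra_simps)
    moreover have cc: "c * c > 0" using c0 by (auto simp: zero_less_mult_iff linorder_neq_iff)
    ultimately have "2 * (s + 1) \<le> s" using mult_le_cancel_left_pos[OF cc] by blast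
    hence "2 * s + 2 \<le> s" by (simp add: algebra_simps)
    thus False using s0 by simp
  qed
  with pM show ?thesis by blast
qed

lemma riesz:
  fixes \<phi> :: "'v \<Rightarrow> real"
  assumes add: "\<And>x y. \<phi> (x + y) = \<phi> x + \<phi> y"
    and scl: "\<And>r x. \<phi> (r *\<^sub>R x) = r * \<phi> x"
    and bnd: "\<And>x. \<bar>\<phi> x\<bar> \<le> K * norm x"
  shows "\<exists>z. \<forall>x. \<phi> x = ip x z"
proof (cases "\<forall>x. \<phi> x = 0")
  case True then show ?thesis by (intro exI[of _ 0]) simp
next
  case False
  then obtain x0 where x0: "\<phi> x0 \<noteq> 0" by blast
  have bl: "bounded_linear \<phi>"
  proof (rule bounded_linear_intro[of _ K])
    show "\<phi> (x + y) = \<phi> x + \<phi> y" for x y by (rule add)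
    show "\<phi> (r *\<^sub>R x) = r *\<^sub>R \<phi> x" for r x using scl by simp
    show "norm (\<phi> x) \<le> norm x * K" for x using bnd[of x] by (simp add: mult.commute)
  qed
  define N where "N = {x. \<phi> x = 0}"
  have clN: "closed N" unfolding N_def
    by (rule closed_Collect_eq) (auto intro: linear_continuous_on[OF bl])
  have p0: "\<phi> 0 = 0" using scl[of 0 0] by simp
  have subN: "rsubspace N" unfolding N_def rsubspace_def using add scl p0 by auto
  obtain p where pN: "p \<in> N" and po: "\<forall>y\<in>N. ip (x0 - p) y = 0"
    using proj_exists[OF subN clN] by blast
  define e where "e = x0 - p"
  have phie: "\<phi> e = \<phi> x0"
  proof -
    have "x0 - p = x0 + (-1) *\<^sub>R p" by simp
    hence "\<phi> e = \<phi> x0 + \<phi> ((-1) *\<^sub>R p)" unfolding e_def by (simp only: add)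
    thus ?thesis using pN scl[of "-1" p] by (simp add: N_def)
  qed
  have e0: "e \<noteq> 0" using phie x0 p0 by auto
  have key: "ip x e = \<phi> x / \<phi> e * (norm e)\<^sup>2" for x
  proof -
    have "\<phi> (x + (- (\<phi> x / \<phi> e)) *\<^sub>R e) = \<phi> x + (- (\<phi> x / \<phi> e)) * \<phi> e"
      by (simp only: add scl)
    also have "\<dots> = 0" using phie x0 by simp
    finally have "\<phi> (x + (- (\<phi> x / \<phi> e)) *\<^sub>R e) = 0" .
    hence "x + (- (\<phi> x / \<phi> e)) *\<^sub>R e \<in> N" by (simp add: N_def)
    hence "ip e (x + (- (\<phi> x / \<phi> e)) *\<^sub>R e) = 0" using po unfolding e_def by blast
    hence "ip e x - \<phi> x / \<phi> e * ip e e = 0" by (simp add: ip_add_right ip_scale_right ip_diff_right)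
    thus ?thesis by (simp add: ip_sym[of e x] ip_self)
  qed
  show ?thesis
  proof (intro exI allI)
    fix x
    show "\<phi> x = ip x ((\<phi> e / (norm e)\<^sup>2) *\<^sub>R e)"
      using e0 x0 phie by (simp add: ip_scale_right key)
  qed
qed

lemma surj_lemma:
  fixes T :: "'v \<Rightarrow> 'v" and Dm :: "'v set"
  assumes sub: "rsubspace Dm"
    and tadd: "\<And>x y. x \<in> Dm \<Longrightarrow> y \<in> Dm \<Longrightarrow> T (x + y) = T x + T y"
    and tscl: "\<And>r x. x \<in> Dm \<Longrightarrow> T (r *\<^sub>R x) = r *\<^sub>R T x"
    and bnd: "\<And>p. p \<in> Dm \<Longrightarrow> norm p \<le> C * norm (T p)"
    and clo: "\<And>X p y. (\<forall>n. X n \<in> Dm) \<Longrightarrow> X \<longlonglongrightarrow> p \<Longrightarrow> (\<lambda>n. T (X n)) \<longlonglongrightarrow> y \<Longrightarrow> p \<in> Dm \<and> T p = y"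
    and orth: "\<And>h. (\<forall>p\<in>Dm. ip (T p) h = 0) \<Longrightarrow> h = 0"
  shows "T ` Dm = UNIV"
proof -
  define R where "R = T ` Dm"
  have tdiff: "T (x - y) = T x - T y" if "x \<in> Dm" "y \<in> Dm" for x y
  proof -
    have "(-1) *\<^sub>R y \<in> Dm" using sub that unfolding rsubspace_def by blast
    hence "T (x + (-1) *\<^sub>R y) = T x + T ((-1) *\<^sub>R y)" using tadd that by blast
    thus ?thesis using tscl[OF that(2), of "-1"] by simp
  qed
  have subR: "rsubspace R" unfolding R_def rsubspace_def
  proof (intro conjI ballI allI)
    have "0 \<in> Dm" using sub by (simp add: rsubspace_def)
    moreover have "T 0 = 0" using tscl[OF \<open>0 \<in> Dm\<close>, of 0] by simp
    ultimately show "0 \<in> T ` Dm" by force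
  next
    fix x y assume "x \<in> T ` Dm" "y \<in> T ` Dm"
    then obtain x' y' where "x' \<in> Dm" "y' \<in> Dm" "x = T x'" "y = T y'" by blast
    moreover have "x' + y' \<in> Dm" using sub calculation by (simp add: rsubspace_def)
    ultimately show "x + y \<in> T ` Dm" using tadd by (metis image_eqI)
  next
    fix r x assume "x \<in> T ` Dm"
    then obtain x' where "x' \<in> Dm" "x = T x'" by blast
    moreover have "r *\<^sub>R x' \<in> Dm" using sub calculation by (simp add: rsubspace_def)
    ultimately show "r *\<^sub>R x \<in> T ` Dm" using tscl by (metis image_eqI)
  qed
  have C1: "norm p \<le> (\<bar>C\<bar> + 1) * norm (T p)" if "p \<in> Dm" for p
  proof -
    have "C * norm (T p) \<le> (\<bar>C\<bar> + 1) * norm (T p)" by (rule mult_right_mono) auto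
    thus ?thesis using bnd[OF that] by linarith
  qed
  have clR: "closed R" unfolding closed_sequential_limits
  proof (intro allI impI, elim conjE)
    fix Y y assume YR: "\<forall>n. Y n \<in> R" and Yy: "Y \<longlonglongrightarrow> y"
    have "\<forall>n. \<exists>x. x \<in> Dm \<and> Y n = T x" using YR unfolding R_def by blast
    from choice[OF this] obtain X where "\<forall>n. X n \<in> Dm \<and> Y n = T (X n)" by blast
    hence X: "\<And>n. X n \<in> Dm" "\<And>n. Y n = T (X n)" by auto
    have "Cauchy X"
    proof (rule CauchyI)
      fix e :: real assume e: "0 < e"
      have "0 < e / (\<bar>C\<bar> + 1)" using e by simp
      from CauchyD[OF LIMSEQ_imp_Cauchy[OF Yy] this] obtain M where
        M: "\<forall>m\<ge>M. \<forall>n\<ge>M. norm (Y m - Y n) < e / (\<bar>C\<bar> + 1)" by blast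
      have "norm (X m - X n) < e" if "m \<ge> M" "n \<ge> M" for m n
      proof -
        have "norm (X m - X n) \<le> (\<bar>C\<bar> + 1) * norm (T (X m - X n))"
          using C1 rsubspace_diff[OF sub X(1) X(1)] by blast
        also have "T (X m - X n) = Y m - Y n" using tdiff X by simp
        also have "(\<bar>C\<bar> + 1) * norm (Y m - Y n) < (\<bar>C\<bar> + 1) * (e / (\<bar>C\<bar> + 1))"
          using M that by (intro mult_strict_left_mono) auto
        finally show ?thesis by simp
      qed
      thus "\<exists>M. \<forall>m\<ge>M. \<forall>n\<ge>M. norm (X m - X n) < e" by blast
    qed
    then obtain p where "X \<longlonglongrightarrow> p" using Cauchy_convergent convergent_def by blast
    moreover have "(\<lambda>n. T (X n)) = Y" by (rule ext) (simp add: X(2))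
    hence "(\<lambda>n. T (X n)) \<longlonglongrightarrow> y" using Yy by simp
    ultimately have "p \<in> Dm \<and> T p = y" using clo X(1) by blast
    thus "y \<in> R" unfolding R_def by blast
  qed
  have "x \<in> R" for x
  proof -
    obtain q where qR: "q \<in> R" and qo: "\<forall>y\<in>R. ip (x - q) y = 0"
      using proj_exists[OF subR clR] by blast
    have "\<forall>p\<in>Dm. ip (T p) (x - q) = 0" using qo by (simp add: R_def ip_sym)
    hence "x - q = 0" by (rule orth)
    thus ?thesis using qR by simp
  qed
  thus ?thesis unfolding R_def by blast
qed

end



lemma rhs_chilbert: "rhs (\<lambda>(x::'a::chilbert) y. Re (cinner x y))"
proof
  fix x y z :: 'a and r :: real
  show "Re (cinner x y) = Re (cinner y x)" by (rule Re_cinner_sym)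
  show "Re (cinner (x + y) z) = Re (cinner x z) + Re (cinner y z)" by (simp add: cinner_add_left)
  show "Re (cinner (r *\<^sub>R x) y) = r * Re (cinner x y)" by (simp add: cinner_scaleR_left)
  show "Re (cinner x x) = (norm x)\<^sup>2" by (rule Re_cinner_self)
qed

definition pip :: "('a::chilbert \<times> 'b::chilbert) \<Rightarrow> ('a \<times> 'b) \<Rightarrow> real" where
  "pip p q = Re (cinner (fst p) (fst q)) + Re (cinner (snd p) (snd q))"

lemma rhs_prod: "rhs (pip :: ('a::chilbert \<times> 'b::chilbert) \<Rightarrow> _)"
proof
  fix x y z :: "'a \<times> 'b" and r :: real
  show "pip x y = pip y x" by (simp add: pip_def Re_cinner_sym)
  show "pip (x + y) z = pip x z + pip y z" by (simp add: pip_def cinner_add_left)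
  show "pip (r *\<^sub>R x) y = r * pip x y" by (simp add: pip_def cinner_scaleR_left algebra_simps)
  show "pip x x = (norm x)\<^sup>2" by (simp add: pip_def Re_cinner_self norm_prod_def)
qed

lemma rcs: "\<bar>Re (cinner x y)\<bar> \<le> norm x * norm y"
  using rhs.cs[OF rhs_chilbert, of x y] by simp

lemma norm_scaleC: "norm (c *\<^sub>C x) = cmod c * norm (x::'a::chilbert)"
proof -
  have "cinner (c *\<^sub>C x) (c *\<^sub>C x) = (c * cnj c) * cinner x x"
    by (simp add: cinner_scaleC_left cinner_scaleC_right)
  also have "c * cnj c = complex_of_real ((cmod c)\<^sup>2)" by (rule complex_norm_square[symmetric])
  finally have "Re (cinner (c *\<^sub>C x) (c *\<^sub>C x)) = (cmod c)\<^sup>2 * Re (cinner x x)" by simp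
  hence "(norm (c *\<^sub>C x))\<^sup>2 = (cmod c)\<^sup>2 * (norm x)\<^sup>2" by (simp only: Re_cinner_self)
  hence "(norm (c *\<^sub>C x))\<^sup>2 = (cmod c * norm x)\<^sup>2" by (simp add: power_mult_distrib)
  thus ?thesis by (simp add: power2_eq_iff_nonneg)
qed

lemma ccs: "cmod (cinner x y) \<le> norm x * norm (y::'a::chilbert)"
proof (cases "cinner x y = 0")
  case True then show ?thesis by simp
next
  case False
  define c where "c = cinner x y"
  have c0: "cmod c > 0" using False by (simp add: c_def)
  define k where "k = cnj c / complex_of_real (cmod c)"
  have k1: "cmod k = 1" using c0 by (simp add: k_def norm_divide)
  have "cinner (k *\<^sub>C x) y = k * c" by (simp add: cinner_scaleC_left c_def)
  also have "k * c = complex_of_real (cmod c)"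
  proof -
    have "cnj c * c = complex_of_real ((cmod c)\<^sup>2)" by (subst mult.commute, rule complex_norm_square[symmetric])
    thus ?thesis using c0 by (simp add: k_def power2_eq_square)
  qed
  finally have "Re (cinner (k *\<^sub>C x) y) = cmod c" by simp
  moreover have "\<bar>Re (cinner (k *\<^sub>C x) y)\<bar> \<le> norm (k *\<^sub>C x) * norm y" by (rule rcs)
  ultimately show ?thesis using k1 by (simp add: norm_scaleC c_def)
qed

lemma bl_cinner_right: "bounded_linear (\<lambda>y. cinner w (y::'a::chilbert))"
proof (rule bounded_linear_intro[of _ "norm w"])
  show "cinner w (x + y) = cinner w x + cinner w y" for x y by (rule cinner_add_right)
  show "cinner w (r *\<^sub>R x) = r *\<^sub>R cinner w x" for r x
    by (simp add: scaleR_scaleC cinner_scaleC_right scaleR_conv_of_real)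
  show "norm (cinner w x) \<le> norm x * norm w" for x using ccs[of w x] by (simp add: mult.commute)
qed

lemma bl_cinner_left: "bounded_linear (\<lambda>y. cinner (y::'a::chilbert) w)"
proof (rule bounded_linear_intro[of _ "norm w"])
  show "cinner (x + y) w = cinner x w + cinner y w" for x y by (rule cinner_add_left)
  show "cinner (r *\<^sub>R x) w = r *\<^sub>R cinner x w" for r x
    by (simp add: cinner_scaleR_left scaleR_conv_of_real)
  show "norm (cinner x w) \<le> norm x * norm w" for x using ccs[of x w] by simp
qed

lemma cinner_self_eq_0: "cinner x x = 0 \<longleftrightarrow> x = (0::'a::chilbert)"
  by (simp add: cinner_self_norm)

section \<open>Linear operators\<close>

lemma scaleC_minus_one: "(-1) *\<^sub>C x = - (x::'a::complex_vec)"
  by (simp add: scaleC_minus_left scaleC_one)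

context
  fixes A :: "('a::chilbert \<times> 'b::chilbert) set"
  assumes L: "lin_op A"
begin

lemma lin0: "(0, 0) \<in> A" using L by (simp add: lin_op_def)

lemma lin_add: "(x, y) \<in> A \<Longrightarrow> (u, v) \<in> A \<Longrightarrow> (x + u, y + v) \<in> A"
  using L by (simp add: lin_op_def)

lemma lin_scale: "(x, y) \<in> A \<Longrightarrow> (c *\<^sub>C x, c *\<^sub>C y) \<in> A"
  using L by (simp add: lin_op_def)

lemma lin_minus: "(x, y) \<in> A \<Longrightarrow> (- x, - y) \<in> A"
  using lin_scale[of x y "-1"] by (simp add: scaleC_minus_one)

lemma lin_diff: "(x, y) \<in> A \<Longrightarrow> (u, v) \<in> A \<Longrightarrow> (x - u, y - v) \<in> A"
  using lin_add[of x y "- u" "- v"] lin_minus[of u v] by simp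

lemma lin_unique: "(x, y) \<in> A \<Longrightarrow> (x, y') \<in> A \<Longrightarrow> y = y'"
proof -
  assume "(x, y) \<in> A" "(x, y') \<in> A"
  hence "(0, y - y') \<in> A" using lin_diff by fastforce
  hence "y - y' = 0" using L unfolding lin_op_def by blast
  thus "y = y'" by simp
qed

lemma op_app_eq: "(x, y) \<in> A \<Longrightarrow> op_app A x = y"
  unfolding op_app_def using lin_unique by blast

lemma op_app_in: "x \<in> Domain A \<Longrightarrow> (x, op_app A x) \<in> A"
  using op_app_eq by blast

lemma op_app_zero: "op_app A 0 = 0"
  using op_app_eq[OF lin0] .

lemma dom_add: "x \<in> Domain A \<Longrightarrow> u \<in> Domain A \<Longrightarrow> x + u \<in> Domain A"
  using lin_add by blast

lemma dom_scale: "x \<in> Domain A \<Longrightarrow> c *\<^sub>C x \<in> Domain A"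
  using lin_scale by blast

lemma dom_diff: "x \<in> Domain A \<Longrightarrow> u \<in> Domain A \<Longrightarrow> x - u \<in> Domain A"
  using lin_diff by blast

lemma dom_zero: "0 \<in> Domain A" using lin0 by blast

lemma op_app_add: "x \<in> Domain A \<Longrightarrow> u \<in> Domain A \<Longrightarrow> op_app A (x + u) = op_app A x + op_app A u"
  by (rule op_app_eq, rule lin_add) (auto intro: op_app_in)

lemma op_app_diff: "x \<in> Domain A \<Longrightarrow> u \<in> Domain A \<Longrightarrow> op_app A (x - u) = op_app A x - op_app A u"
  by (rule op_app_eq, rule lin_diff) (auto intro: op_app_in)

lemma op_app_scale: "x \<in> Domain A \<Longrightarrow> op_app A (c *\<^sub>C x) = c *\<^sub>C op_app A x"
  by (rule op_app_eq, rule lin_scale) (auto intro: op_app_in)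

lemma op_app_minus: "x \<in> Domain A \<Longrightarrow> op_app A (- x) = - op_app A x"
  by (rule op_app_eq, rule lin_minus) (auto intro: op_app_in)

lemma lin_rsubspace: "rsubspace A"
  unfolding rsubspace_def
proof (intro conjI ballI allI)
  show "0 \<in> A" using lin0 by (simp add: zero_prod_def)
  show "x + y \<in> A" if "x \<in> A" "y \<in> A" for x y
  proof -
    have "x + y = (fst x + fst y, snd x + snd y)" by (simp add: prod_eq_iff)
    thus ?thesis using lin_add[of "fst x" "snd x" "fst y" "snd y"] that by simp
  qed
  show "r *\<^sub>R x \<in> A" if "x \<in> A" for r x
  proof -
    have "r *\<^sub>R x = (complex_of_real r *\<^sub>C fst x, complex_of_real r *\<^sub>C snd x)"
      by (simp add: prod_eq_iff scaleR_scaleC)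
    thus ?thesis using lin_scale[of "fst x" "snd x" "complex_of_real r"] that by simp
  qed
qed

lemma dom_rsubspace: "rsubspace (Domain A)"
  unfolding rsubspace_def using dom_zero dom_add dom_scale[of _ "complex_of_real _"]
  by (auto simp: scaleR_scaleC)

end

lemma neg_op_iff: "(x, y) \<in> neg_op A \<longleftrightarrow> (x, - y) \<in> A"
  unfolding neg_op_def by force

lemma neg_neg: "neg_op (neg_op A) = A"
  by (auto simp: neg_op_iff)

lemma Domain_neg: "Domain (neg_op A) = Domain A"
proof
  show "Domain (neg_op A) \<subseteq> Domain A" by (auto simp: neg_op_iff)
  show "Domain A \<subseteq> Domain (neg_op A)"
  proof
    fix x assume "x \<in> Domain A"
    then obtain y where "(x, y) \<in> A" by blast
    hence "(x, - y) \<in> neg_op A" by (simp add: neg_op_iff)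
    thus "x \<in> Domain (neg_op A)" by blast
  qed
qed

lemma lin_neg: "lin_op A \<Longrightarrow> lin_op (neg_op A)"
  unfolding lin_op_def neg_op_iff
proof (intro conjI allI impI)
  assume L: "(0, 0) \<in> A \<and> (\<forall>x y u v. (x, y) \<in> A \<longrightarrow> (u, v) \<in> A \<longrightarrow> (x + u, y + v) \<in> A) \<and>
    (\<forall>c x y. (x, y) \<in> A \<longrightarrow> (c *\<^sub>C x, c *\<^sub>C y) \<in> A) \<and> (\<forall>y. (0, y) \<in> A \<longrightarrow> y = 0)"
  show "(0, - 0) \<in> A" using L by simp
  show "(x + u, - (y + v)) \<in> A" if "(x, - y) \<in> A" "(u, - v) \<in> A" for x y u v
    using L that by (metis minus_add_distrib)
  show "(c *\<^sub>C x, - (c *\<^sub>C y)) \<in> A" if "(x, - y) \<in> A" for c x y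
    using L that by (metis scaleC_minus_right)
  show "y = 0" if "(0, - y) \<in> A" for y
    using L that by (metis neg_equal_0_iff_equal)
qed

lemma op_app_neg: "lin_op A \<Longrightarrow> x \<in> Domain A \<Longrightarrow> op_app (neg_op A) x = - op_app A x"
  by (rule op_app_eq[OF lin_neg]) (auto simp: neg_op_iff intro: op_app_in)

lemma closed_neg: "closed (A::('a::real_normed_vector \<times> 'b::real_normed_vector) set) \<Longrightarrow> closed (neg_op A)"
proof -
  assume "closed A"
  have "neg_op A = (\<lambda>p. (fst p, - snd p)) -` A" by (auto simp: neg_op_iff)
  moreover have "closed ((\<lambda>p. (fst p, - snd p)) -` A)"
    by (rule continuous_closed_vimage[OF \<open>closed A\<close>]) (intro continuous_intros)
  ultimately show ?thesis by simp
qed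

lemma closed_op_neg: "closed_op A \<Longrightarrow> closed_op (neg_op A)"
  unfolding closed_op_def using lin_neg closed_neg by blast

section \<open>Adjoints\<close>

lemma adj_iff: "(y, z) \<in> adj A \<longleftrightarrow> (\<forall>x w. (x, w) \<in> A \<longrightarrow> cinner w y = cinner x z)"
  unfolding adj_def by simp

lemma adj0: "(0, 0) \<in> adj A" by (simp add: adj_iff)

lemma adj_add: "(y, z) \<in> adj A \<Longrightarrow> (y', z') \<in> adj A \<Longrightarrow> (y + y', z + z') \<in> adj A"
  by (simp add: adj_iff cinner_add_right)

lemma adj_scale: "(y, z) \<in> adj A \<Longrightarrow> (c *\<^sub>C y, c *\<^sub>C z) \<in> adj A"
  by (simp add: adj_iff cinner_scaleC_right)

lemma adj_single:
  assumes "densely_defined A" and "(0, z) \<in> adj A"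
  shows "z = 0"
proof -
  have "Domain A \<subseteq> {x. cinner x z = 0}" using assms(2) by (auto simp: adj_iff)
  moreover have "closed {x. cinner x z = 0}"
    by (rule closed_Collect_eq) (auto intro: linear_continuous_on bl_cinner_left)
  ultimately have "closure (Domain A) \<subseteq> {x. cinner x z = 0}" by (rule closure_minimal)
  hence "cinner z z = 0" using assms(1) by (auto simp: densely_defined_def)
  thus ?thesis by (simp add: cinner_self_eq_0)
qed

lemma lin_adj: "densely_defined A \<Longrightarrow> lin_op (adj A)"
  unfolding lin_op_def using adj0 adj_add adj_scale adj_single by blast

lemma closed_adj: fixes A :: "('a::chilbert \<times> 'b::chilbert) set" shows "closed (adj A)"
proof -
  have "adj A = (\<Inter>p\<in>A. {q. cinner (snd p) (fst q) = cinner (fst p) (snd q)})"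
  proof (intro equalityI subsetI)
    fix q assume "q \<in> adj A"
    thus "q \<in> (\<Inter>p\<in>A. {q. cinner (snd p) (fst q) = cinner (fst p) (snd q)})"
      unfolding adj_def by (cases q) auto
  next
    fix q assume H: "q \<in> (\<Inter>p\<in>A. {q. cinner (snd p) (fst q) = cinner (fst p) (snd q)})"
    show "q \<in> adj A" unfolding adj_iff[of "fst q" "snd q" A, simplified]
    proof (intro allI impI)
      fix x w assume "(x, w) \<in> A"
      with H show "cinner w (fst q) = cinner x (snd q)" by force
    qed
  qed
  moreover have cl: "closed {q. cinner (snd p) (fst q) = cinner (fst p) (snd q)}" for p :: "'a \<times> 'b"
    by (rule closed_Collect_eq; rule linear_continuous_on;
        rule bounded_linear_compose[OF bl_cinner_right]; intro bounded_linear_fst bounded_linear_snd)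
  ultimately show ?thesis by (simp only:) (intro closed_INT ballI cl)
qed

lemma adj_neg: "adj (neg_op A) = neg_op (adj A)"
proof -
  have "(y, z) \<in> adj (neg_op A) \<longleftrightarrow> (y, z) \<in> neg_op (adj A)" for y z
  proof -
    have "(y, z) \<in> adj (neg_op A) \<longleftrightarrow> (\<forall>x w. (x, - w) \<in> A \<longrightarrow> cinner w y = cinner x z)"
      by (simp add: adj_iff neg_op_iff)
    also have "\<dots> \<longleftrightarrow> (\<forall>x w. (x, w) \<in> A \<longrightarrow> cinner w y = cinner x (- z))"
    proof
      assume H: "\<forall>x w. (x, - w) \<in> A \<longrightarrow> cinner w y = cinner x z"
      show "\<forall>x w. (x, w) \<in> A \<longrightarrow> cinner w y = cinner x (- z)"
      proof (intro allI impI)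
        fix x w assume "(x, w) \<in> A"
        hence "(x, - (- w)) \<in> A" by simp
        hence "cinner (- w) y = cinner x z" using H by blast
        hence "- cinner w y = cinner x z" by (simp only: cinner_minus_left)
        hence "cinner w y = - cinner x z" by (metis minus_minus)
        thus "cinner w y = cinner x (- z)" by (simp only: cinner_minus_right)
      qed
    next
      assume H: "\<forall>x w. (x, w) \<in> A \<longrightarrow> cinner w y = cinner x (- z)"
      show "\<forall>x w. (x, - w) \<in> A \<longrightarrow> cinner w y = cinner x z"
      proof (intro allI impI)
        fix x w assume "(x, - w) \<in> A"
        hence "cinner (- w) y = cinner x (- z)" using H by blast
        hence "- cinner w y = - cinner x z" by (simp only: cinner_minus_left cinner_minus_right)
        thus "cinner w y = cinner x z" by simp
      qed
    qed
    also have "\<dots> \<longleftrightarrow> (y, z) \<in> neg_op (adj A)" by (simp add: neg_op_iff adj_iff)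
    finally show ?thesis .
  qed
  thus ?thesis by auto
qed

lemma adj_anti: "A \<subseteq> B \<Longrightarrow> adj B \<subseteq> adj A"
  unfolding adj_def by blast

lemma adj_adj_sup: "A \<subseteq> adj (adj A)"
proof
  fix p assume "p \<in> A"
  then obtain x w where p: "p = (x, w)" "(x, w) \<in> A" by (cases p) auto
  have "cinner z x = cinner y w" if "(y, z) \<in> adj A" for y z
  proof -
    have "cinner w y = cinner x z" using that p(2) by (simp add: adj_iff)
    hence "cnj (cinner w y) = cnj (cinner x z)" by simp
    thus ?thesis by (simp add: cinner_commute[of y w] cinner_commute[of z x])
  qed
  thus "p \<in> adj (adj A)" using p by (auto simp: adj_iff)
qed

lemma adj_from_Re:
  assumes L: "lin_op A"
    and h: "\<And>x w. (x, w) \<in> A \<Longrightarrow> Re (cinner w y) = Re (cinner x z)"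
  shows "(y, z) \<in> adj A"
  unfolding adj_iff
proof (intro allI impI)
  fix x w assume xw: "(x, w) \<in> A"
  have "(\<i> *\<^sub>C x, \<i> *\<^sub>C w) \<in> A" using lin_scale[OF L xw] .
  from h[OF this] h[OF xw] show "cinner w y = cinner x z" by (intro cinner_eq_from_Re) auto
qed

lemma adj_adj_sub:
  assumes L: "lin_op A" and C: "closed A"
  shows "adj (adj A) \<subseteq> A"
proof
  fix q assume q: "q \<in> adj (adj A)"
  obtain f y where fy: "q = (f, y)" by (cases q)
  obtain p where pA: "p \<in> A" and po: "\<forall>r\<in>A. pip (q - p) r = 0"
    using rhs.proj_exists[OF rhs_prod lin_rsubspace[OF L] C] by blast
  obtain u v where uv: "p = (u, v)" by (cases p)
  define e1 where "e1 = f - u"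
  define e2 where "e2 = y - v"
  have orth: "Re (cinner e1 x) + Re (cinner e2 w) = 0" if "(x, w) \<in> A" for x w
    using po that by (auto simp: pip_def fy uv e1_def e2_def)
  have "(e2, - e1) \<in> adj A"
  proof (rule adj_from_Re[OF L])
    fix x w assume "(x, w) \<in> A"
    from orth[OF this] show "Re (cinner w e2) = Re (cinner x (- e1))"
      by (simp add: cinner_minus_right Re_cinner_sym[of w] Re_cinner_sym[of x])
  qed
  hence h1: "cinner (- e1) f = cinner e2 y" and h2: "cinner (- e1) u = cinner e2 v"
    using q fy adj_adj_sup[of A] pA uv by (auto simp: adj_iff)
  have "cinner (- e1) e1 = cinner e2 e2"
    using h1 h2 by (simp add: e1_def e2_def cinner_diff_right)
  hence "Re (cinner (- e1) e1) = Re (cinner e2 e2)" by simp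
  hence "- (norm e1)\<^sup>2 = (norm e2)\<^sup>2"
    by (simp add: cinner_minus_left Re_cinner_self)
  hence "(norm e1)\<^sup>2 + (norm e2)\<^sup>2 = 0" by linarith
  hence "norm e1 = 0 \<and> norm e2 = 0" by (simp only: sum_power2_eq_zero_iff)
  hence "e1 = 0 \<and> e2 = 0" by simp
  thus "q \<in> A" using pA by (simp add: fy uv e1_def e2_def)
qed



context
  fixes f :: "'a::chilbert \<Rightarrow> 'b::chilbert"
  assumes BC: "bounded_clop f"
begin

lemma bc_add: "f (x + y) = f x + f y"
  using BC by (simp add: bounded_clop_def)

lemma bc_scaleC: "f (c *\<^sub>C x) = c *\<^sub>C f x"
  using BC by (simp add: bounded_clop_def)

lemma bc_scaleR: "f (r *\<^sub>R x) = r *\<^sub>R f x"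
  by (simp only: scaleR_scaleC bc_scaleC)

lemma bc_zero: "f 0 = 0"
  using bc_scaleR[of 0 0] by simp

lemma bc_minus: "f (- x) = - f x"
  using bc_scaleR[of "-1" x] by simp

lemma bc_diff: "f (x - y) = f x - f y"
  by (simp only: diff_conv_add_uminus bc_add bc_minus)

lemma bc_bound: "\<exists>K>0. \<forall>x. norm (f x) \<le> K * norm x"
proof -
  obtain K where K: "\<And>x. norm (f x) \<le> K * norm x" using BC by (auto simp: bounded_clop_def)
  have "norm (f x) \<le> (\<bar>K\<bar> + 1) * norm x" for x
  proof -
    have "K * norm x \<le> (\<bar>K\<bar> + 1) * norm x" by (rule mult_right_mono) auto
    thus ?thesis using K[of x] by linarith
  qed
  moreover have "\<bar>K\<bar> + 1 > 0" by simp
  ultimately show ?thesis by blast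
qed

lemma bc_bl: "bounded_linear f"
proof -
  obtain K where K: "\<And>x. norm (f x) \<le> K * norm x" using bc_bound by blast
  show ?thesis
  proof (rule bounded_linear_intro[of _ K])
    show "f (x + y) = f x + f y" for x y by (rule bc_add)
    show "f (r *\<^sub>R x) = r *\<^sub>R f x" for r x by (rule bc_scaleR)
    show "norm (f x) \<le> norm x * K" for x using K[of x] by (simp add: mult.commute)
  qed
qed

lemma bc_tendsto: "X \<longlonglongrightarrow> x \<Longrightarrow> (\<lambda>n. f (X n)) \<longlonglongrightarrow> f x"
  by (rule bounded_linear.tendsto[OF bc_bl])

lemma bc_radj: "\<exists>z. \<forall>w. Re (cinner (f w) h) = Re (cinner w z)"
proof -
  obtain K where K: "\<And>x. norm (f x) \<le> K * norm x" using bc_bound by blast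
  have "\<exists>z. \<forall>w. Re (cinner (f w) h) = (\<lambda>x y. Re (cinner x y)) w z"
  proof (rule rhs.riesz[OF rhs_chilbert, of "\<lambda>w. Re (cinner (f w) h)" "K * norm h"])
    show "Re (cinner (f (x + y)) h) = Re (cinner (f x) h) + Re (cinner (f y) h)" for x y
      by (simp add: bc_add cinner_add_left)
    show "Re (cinner (f (r *\<^sub>R x)) h) = r * Re (cinner (f x) h)" for r x
      by (simp add: bc_scaleR cinner_scaleR_left)
    show "\<bar>Re (cinner (f x) h)\<bar> \<le> K * norm h * norm x" for x
    proof -
      have "\<bar>Re (cinner (f x) h)\<bar> \<le> norm (f x) * norm h" by (rule rcs)
      also have "\<dots> \<le> K * norm x * norm h" by (rule mult_right_mono[OF K]) simp
      finally show ?thesis by (simp add: mult_ac)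
    qed
  qed
  thus ?thesis by simp
qed

end

section \<open>Coercive operators\<close>

context
  fixes a :: "'b::chilbert \<Rightarrow> 'b"
  assumes BC: "bounded_clop a" and CO: "coercive a"
begin

lemma co_lower: "\<exists>\<mu>>0. \<forall>x. \<mu> * norm x \<le> norm (a x)"
proof -
  obtain \<mu> where mu: "\<mu> > 0" "\<And>x. Re (cinner (a x) x) \<ge> \<mu> * (norm x)\<^sup>2"
    using CO by (auto simp: coercive_def)
  have "\<mu> * norm x \<le> norm (a x)" for x
  proof (cases "x = 0")
    case True then show ?thesis by (simp add: bc_zero[OF BC])
  next
    case False
    have "\<mu> * norm x * norm x = \<mu> * (norm x)\<^sup>2" by (simp add: power2_eq_square)
    also have "\<dots> \<le> Re (cinner (a x) x)" by (rule mu(2))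
    also have "\<dots> \<le> norm (a x) * norm x" using rcs[of "a x" x] by linarith
    finally show ?thesis using False by simp
  qed
  with mu show ?thesis by blast
qed

lemma co_inj: "inj a"
proof (rule injI)
  fix x y assume "a x = a y"
  hence "a (x - y) = 0" by (simp add: bc_diff[OF BC])
  moreover obtain \<mu> where "\<mu> > 0" "\<And>x. \<mu> * norm x \<le> norm (a x)" using co_lower by blast
  ultimately have "\<mu> * norm (x - y) \<le> 0" by (metis norm_zero)
  with \<open>\<mu> > 0\<close> have "norm (x - y) \<le> 0" by (simp add: mult_le_0_iff)
  thus "x = y" by simp
qed

lemma co_surj: "surj a"
proof -
  obtain \<mu> where mu: "\<mu> > 0" "\<And>x. \<mu> * norm x \<le> norm (a x)" using co_lower by blast
  obtain \<nu> where nu: "\<nu> > 0" "\<And>x. Re (cinner (a x) x) \<ge> \<nu> * (norm x)\<^sup>2"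
    using CO by (auto simp: coercive_def)
  have "a ` UNIV = UNIV"
  proof (rule rhs.surj_lemma[OF rhs_chilbert, of UNIV a "1 / \<mu>"])
    show "rsubspace (UNIV :: 'b set)" by (simp add: rsubspace_def)
    show "a (x + y) = a x + a y" for x y by (rule bc_add[OF BC])
    show "a (r *\<^sub>R x) = r *\<^sub>R a x" for r x by (rule bc_scaleR[OF BC])
    show "norm p \<le> 1 / \<mu> * norm (a p)" for p using mu by (simp add: field_simps)
    show "p \<in> UNIV \<and> a p = y" if "\<forall>n. X n \<in> UNIV" "X \<longlonglongrightarrow> p" "(\<lambda>n. a (X n)) \<longlonglongrightarrow> y" for X p y
      using LIMSEQ_unique[OF bc_tendsto[OF BC that(2)] that(3)] by simp
    show "h = 0" if "\<forall>p\<in>UNIV. Re (cinner (a p) h) = 0" for h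
    proof -
      have "\<nu> * (norm h)\<^sup>2 \<le> 0" using nu(2)[of h] that by simp
      thus ?thesis using nu(1) by (simp add: mult_le_0_iff)
    qed
  qed
  thus ?thesis by simp
qed

lemma co_bij: "bij a" using co_inj co_surj by (simp add: bij_def)

lemma a_inv: "a (inv a q) = q" by (meson co_surj surj_f_inv_f)

lemma inv_a: "inv a (a x) = x" by (meson co_inj inv_f_f)

lemma inv_bc: "bounded_clop (inv a)"
  unfolding bounded_clop_def
proof (intro conjI allI)
  show "inv a (x + y) = inv a x + inv a y" for x y
  proof -
    have "a (inv a x + inv a y) = x + y" by (simp add: bc_add[OF BC] a_inv)
    thus ?thesis by (metis inv_a)
  qed
  show "inv a (c *\<^sub>C x) = c *\<^sub>C inv a x" for c x
  proof -
    have "a (c *\<^sub>C inv a x) = c *\<^sub>C x" by (simp add: bc_scaleC[OF BC] a_inv)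
    thus ?thesis by (metis inv_a)
  qed
  obtain \<mu> where mu: "\<mu> > 0" "\<And>x. \<mu> * norm x \<le> norm (a x)" using co_lower by blast
  have "norm (inv a x) \<le> 1 / \<mu> * norm x" for x
    using mu(2)[of "inv a x"] mu(1) by (simp add: a_inv field_simps)
  thus "\<exists>K. \<forall>x. norm (inv a x) \<le> K * norm x" by blast
qed

lemma inv_co: "coercive (inv a)"
proof -
  obtain \<nu> where nu: "\<nu> > 0" "\<And>x. Re (cinner (a x) x) \<ge> \<nu> * (norm x)\<^sup>2"
    using CO by (auto simp: coercive_def)
  obtain K where K: "K > 0" "\<And>x. norm (a x) \<le> K * norm x" using bc_bound[OF BC] by blast
  have "Re (cinner (inv a q) q) \<ge> (\<nu> / K\<^sup>2) * (norm q)\<^sup>2" for q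
  proof -
    define s where "s = inv a q"
    have q: "q = a s" by (simp add: s_def a_inv)
    have "norm q \<le> K * norm s" using K(2) q by simp
    hence "(norm q)\<^sup>2 \<le> (K * norm s)\<^sup>2" by (rule power_mono) simp
    hence "(norm q)\<^sup>2 / K\<^sup>2 \<le> (norm s)\<^sup>2" using K(1) by (simp add: field_simps power_mult_distrib)
    hence "\<nu> * ((norm q)\<^sup>2 / K\<^sup>2) \<le> \<nu> * (norm s)\<^sup>2" by (rule mult_left_mono) (use nu(1) in simp)
    also have "\<dots> \<le> Re (cinner (a s) s)" by (rule nu(2))
    also have "\<dots> = Re (cinner s (a s))" by (rule Re_cinner_sym)
    also have "\<dots> = Re (cinner (inv a q) q)" by (simp add: s_def a_inv)
    finally show ?thesis by simp
  qed
  moreover have "\<nu> / K\<^sup>2 > 0" using nu(1) K(1) by simp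
  ultimately show ?thesis unfolding coercive_def by blast
qed

end



definition blk :: "('b::chilbert \<times> 'a::chilbert) set \<Rightarrow> ('b \<Rightarrow> 'b) \<Rightarrow> ('a \<Rightarrow> 'a) \<Rightarrow> 'a \<times> 'b \<Rightarrow> 'a \<times> 'b" where
  "blk T b m p = (m (fst p) - op_app T (snd p), op_app (adj T) (fst p) + b (snd p))"

lemma block:
  fixes T :: "('b::chilbert \<times> 'a::chilbert) set" and b :: "'b \<Rightarrow> 'b" and m :: "'a \<Rightarrow> 'a"
  assumes LT: "lin_op T" and CT: "closed T" and LA: "lin_op (adj T)"
    and Bb: "bounded_clop b" and Cb: "coercive b" and Bm: "bounded_clop m" and Cm: "coercive m"
  shows "bij_betw (blk T b m) (Domain (adj T) \<times> Domain T) UNIV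
    \<and> (\<exists>C. \<forall>p\<in>Domain (adj T) \<times> Domain T. norm p \<le> C * norm (blk T b m p))"
proof -
  define M where "M = blk T b m"
  define Dm where "Dm = Domain (adj T) \<times> Domain T"
  have Mdef: "M (w, q) = (m w - op_app T q, op_app (adj T) w + b q)" for w q
    by (simp add: M_def blk_def)
  have subDm: "rsubspace Dm" unfolding Dm_def rsubspace_def
  proof (intro conjI ballI allI)
    show "0 \<in> Domain (adj T) \<times> Domain T" using dom_zero[OF LA] dom_zero[OF LT] by (simp add: zero_prod_def)
    show "x + y \<in> Domain (adj T) \<times> Domain T" if "x \<in> Domain (adj T) \<times> Domain T" "y \<in> Domain (adj T) \<times> Domain T" for x y
      using that dom_add[OF LA] dom_add[OF LT] by (auto simp: mem_Times_iff)
    show "r *\<^sub>R x \<in> Domain (adj T) \<times> Domain T" if "x \<in> Domain (adj T) \<times> Domain T" for r x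
      using that dom_scale[OF LA, of _ "complex_of_real r"] dom_scale[OF LT, of _ "complex_of_real r"]
      by (auto simp: mem_Times_iff scaleR_scaleC)
  qed
  have Madd: "M (x + y) = M x + M y" if "x \<in> Dm" "y \<in> Dm" for x y
  proof -
    obtain w q w' q' where xy: "x = (w, q)" "y = (w', q')" by (cases x, cases y)
    with that have d: "w \<in> Domain (adj T)" "q \<in> Domain T" "w' \<in> Domain (adj T)" "q' \<in> Domain T"
      by (auto simp: Dm_def)
    show ?thesis using d
      by (simp add: xy Mdef op_app_add[OF LT] op_app_add[OF LA] bc_add[OF Bm] bc_add[OF Bb] algebra_simps)
  qed
  have Mscl: "M (r *\<^sub>R x) = r *\<^sub>R M x" if "x \<in> Dm" for r x
  proof -
    obtain w q where xy: "x = (w, q)" by (cases x)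
    with that have d: "w \<in> Domain (adj T)" "q \<in> Domain T" by (auto simp: Dm_def)
    show ?thesis using d
      by (simp add: xy Mdef scaleR_scaleC op_app_scale[OF LT] op_app_scale[OF LA]
          bc_scaleC[OF Bm] bc_scaleC[OF Bb] scaleC_diff_right scaleC_add_right)
  qed
  have Mdiff: "M (x - y) = M x - M y" if "x \<in> Dm" "y \<in> Dm" for x y
  proof -
    have "(-1) *\<^sub>R y \<in> Dm" using subDm that unfolding rsubspace_def by blast
    hence "M (x + (-1) *\<^sub>R y) = M x + M ((-1) *\<^sub>R y)" using Madd that by blast
    thus ?thesis using Mscl[OF that(2), of "-1"] by simp
  qed
  obtain \<mu> where mu: "\<mu> > 0" "\<And>x. Re (cinner (m x) x) \<ge> \<mu> * (norm x)\<^sup>2"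
    using Cm by (auto simp: coercive_def)
  obtain \<nu> where nu: "\<nu> > 0" "\<And>x. Re (cinner (b x) x) \<ge> \<nu> * (norm x)\<^sup>2"
    using Cb by (auto simp: coercive_def)
  define c0 where "c0 = min \<mu> \<nu>"
  have c0: "c0 > 0" using mu nu by (simp add: c0_def)
  have adjrel: "cinner (op_app T q) w = cinner q (op_app (adj T) w)"
    if "w \<in> Domain (adj T)" "q \<in> Domain T" for w q
    using op_app_in[OF LA that(1)] op_app_in[OF LT that(2)] by (auto simp: adj_iff)
  have key: "pip (M p) p = Re (cinner (m (fst p)) (fst p)) + Re (cinner (b (snd p)) (snd p))"
    if "p \<in> Dm" for p
  proof -
    obtain w q where p: "p = (w, q)" by (cases p)
    with that have d: "w \<in> Domain (adj T)" "q \<in> Domain T" by (auto simp: Dm_def)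
    have "Re (cinner (op_app (adj T) w) q) = Re (cinner (op_app T q) w)"
      using adjrel[OF d] by (simp add: Re_cinner_sym[of "op_app (adj T) w"])
    thus ?thesis
      by (simp add: p Mdef pip_def cinner_diff_left cinner_add_left)
  qed
  have coer: "c0 * (norm p)\<^sup>2 \<le> pip (M p) p" if "p \<in> Dm" for p
  proof -
    have "c0 * (norm p)\<^sup>2 = c0 * (norm (fst p))\<^sup>2 + c0 * (norm (snd p))\<^sup>2"
      by (simp add: norm_prod_def algebra_simps)
    also have "\<dots> \<le> \<mu> * (norm (fst p))\<^sup>2 + \<nu> * (norm (snd p))\<^sup>2"
      by (intro add_mono mult_right_mono) (auto simp: c0_def)
    also have "\<dots> \<le> pip (M p) p" using key[OF that] mu(2)[of "fst p"] nu(2)[of "snd p"] by linarith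
    finally show ?thesis .
  qed
  have bnd: "norm p \<le> (1 / c0) * norm (M p)" if "p \<in> Dm" for p
  proof (cases "p = 0")
    case True then show ?thesis using c0 by simp
  next
    case False
    have "c0 * norm p * norm p = c0 * (norm p)\<^sup>2" by (simp add: power2_eq_square)
    also have "\<dots> \<le> pip (M p) p" by (rule coer[OF that])
    also have "\<dots> \<le> norm (M p) * norm p" using rhs.cs[OF rhs_prod, of "M p" p] by linarith
    finally have "c0 * norm p \<le> norm (M p)" using False by simp
    thus ?thesis using c0 by (simp add: field_simps)
  qed
  have inj: "inj_on M Dm"
  proof (rule inj_onI)
    fix x y assume xy: "x \<in> Dm" "y \<in> Dm" "M x = M y"
    have "x - y \<in> Dm" using rsubspace_diff[OF subDm xy(1,2)] .
    from bnd[OF this] have "norm (x - y) \<le> 0" using Mdiff[OF xy(1,2)] xy(3) by simp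
    thus "x = y" by simp
  qed
  have surj: "M ` Dm = UNIV"
  proof (rule rhs.surj_lemma[OF rhs_prod subDm Madd Mscl bnd])
    fix X p y
    assume XD: "\<forall>n. X n \<in> Dm" and Xp: "X \<longlonglongrightarrow> p" and MX: "(\<lambda>n. M (X n)) \<longlonglongrightarrow> y"
    obtain w q where p: "p = (w, q)" by (cases p)
    obtain y1 y2 where y: "y = (y1, y2)" by (cases y)
    have d: "fst (X n) \<in> Domain (adj T)" "snd (X n) \<in> Domain T" for n
      using XD by (auto simp: Dm_def mem_Times_iff)
    have w: "(\<lambda>n. fst (X n)) \<longlonglongrightarrow> w" using tendsto_fst[OF Xp] p by simp
    have q: "(\<lambda>n. snd (X n)) \<longlonglongrightarrow> q" using tendsto_snd[OF Xp] p by simp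
    have M1: "(\<lambda>n. m (fst (X n)) - op_app T (snd (X n))) \<longlonglongrightarrow> y1"
      using tendsto_fst[OF MX] y by (simp add: M_def blk_def)
    have M2: "(\<lambda>n. op_app (adj T) (fst (X n)) + b (snd (X n))) \<longlonglongrightarrow> y2"
      using tendsto_snd[OF MX] y by (simp add: M_def blk_def)
    have mw: "(\<lambda>n. m (fst (X n))) \<longlonglongrightarrow> m w" by (rule bc_tendsto[OF Bm w])
    have bq: "(\<lambda>n. b (snd (X n))) \<longlonglongrightarrow> b q" by (rule bc_tendsto[OF Bb q])
    have T1: "(\<lambda>n. op_app T (snd (X n))) \<longlonglongrightarrow> m w - y1"
    proof -
      have "(\<lambda>n. m (fst (X n)) - (m (fst (X n)) - op_app T (snd (X n)))) \<longlonglongrightarrow> m w - y1"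
        by (rule tendsto_diff[OF mw M1])
      thus ?thesis by simp
    qed
    have T2: "(\<lambda>n. op_app (adj T) (fst (X n))) \<longlonglongrightarrow> y2 - b q"
    proof -
      have "(\<lambda>n. (op_app (adj T) (fst (X n)) + b (snd (X n))) - b (snd (X n))) \<longlonglongrightarrow> y2 - b q"
        by (rule tendsto_diff[OF M2 bq])
      thus ?thesis by simp
    qed
    have inT: "(q, m w - y1) \<in> T"
    proof -
      have lim: "(\<lambda>n. (snd (X n), op_app T (snd (X n)))) \<longlonglongrightarrow> (q, m w - y1)"
        by (rule tendsto_Pair[OF q T1])
      have mem: "\<And>n. (snd (X n), op_app T (snd (X n))) \<in> T" using op_app_in[OF LT d(2)] by blast
      show ?thesis by (rule closed_sequentially[OF CT mem lim])
    qed
    have inA: "(w, y2 - b q) \<in> adj T"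
    proof -
      have lim: "(\<lambda>n. (fst (X n), op_app (adj T) (fst (X n)))) \<longlonglongrightarrow> (w, y2 - b q)"
        by (rule tendsto_Pair[OF w T2])
      have mem: "\<And>n. (fst (X n), op_app (adj T) (fst (X n))) \<in> adj T" using op_app_in[OF LA d(1)] by blast
      show ?thesis by (rule closed_sequentially[OF closed_adj mem lim])
    qed
    have "p \<in> Dm" using inT inA by (auto simp: p Dm_def)
    moreover have "M p = y"
      using op_app_eq[OF LT inT] op_app_eq[OF LA inA] by (simp add: p y Mdef)
    ultimately show "p \<in> Dm \<and> M p = y" by blast
  next
    fix h :: "'a \<times> 'b"
    assume H: "\<forall>p\<in>Dm. pip (M p) h = 0"
    obtain f g where h: "h = (f, g)" by (cases h)
    obtain z1 where z1: "\<And>w. Re (cinner (m w) f) = Re (cinner w z1)" using bc_radj[OF Bm] by blast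
    obtain z2 where z2: "\<And>r. Re (cinner (b r) g) = Re (cinner r z2)" using bc_radj[OF Bb] by blast
    have g1: "(g, - z1) \<in> adj (adj T)"
    proof (rule adj_from_Re[OF LA])
      fix w s assume ws: "(w, s) \<in> adj T"
      hence "(w, 0) \<in> Dm" using dom_zero[OF LT] by (auto simp: Dm_def)
      hence "pip (M (w, 0)) h = 0" using H by blast
      moreover have "op_app (adj T) w = s" using op_app_eq[OF LA ws] .
      ultimately have "Re (cinner (m w) f) + Re (cinner s g) = 0"
        by (simp add: Mdef op_app_zero[OF LT] bc_zero[OF Bb] pip_def h)
      thus "Re (cinner s g) = Re (cinner w (- z1))" using z1[of w] by (simp add: cinner_minus_right)
    qed
    have g2: "(g, - z1) \<in> T" using adj_adj_sub[OF LT CT] g1 by blast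
    have f1: "(f, z2) \<in> adj T"
    proof (rule adj_from_Re[OF LT])
      fix q v assume qv: "(q, v) \<in> T"
      hence "(0, q) \<in> Dm" using dom_zero[OF LA] by (auto simp: Dm_def)
      hence "pip (M (0, q)) h = 0" using H by blast
      moreover have "op_app T q = v" using op_app_eq[OF LT qv] .
      ultimately have "- Re (cinner v f) + Re (cinner (b q) g) = 0"
        by (simp add: Mdef op_app_zero[OF LA] bc_zero[OF Bm] pip_def h cinner_minus_left)
      thus "Re (cinner v f) = Re (cinner q z2)" using z2[of q] by simp
    qed
    have "cinner (- z1) f = cinner g z2" using f1 g2 by (simp add: adj_iff)
    hence "Re (cinner (- z1) f) = Re (cinner g z2)" by simp
    hence e: "- Re (cinner z1 f) = Re (cinner (b g) g)" using z2[of g] by (simp add: cinner_minus_left)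
    have "Re (cinner (m f) f) = Re (cinner z1 f)" using z1[of f] by (simp add: Re_cinner_sym[of f])
    hence "Re (cinner (m f) f) + Re (cinner (b g) g) = 0" using e by simp
    hence "\<mu> * (norm f)\<^sup>2 + \<nu> * (norm g)\<^sup>2 \<le> 0" using mu(2)[of f] nu(2)[of g] by linarith
    moreover have "0 \<le> \<mu> * (norm f)\<^sup>2" "0 \<le> \<nu> * (norm g)\<^sup>2" using mu(1) nu(1) by auto
    ultimately have "\<mu> * (norm f)\<^sup>2 = 0" "\<nu> * (norm g)\<^sup>2 = 0" by linarith+
    thus "h = 0" using mu(1) nu(1) by (simp add: h zero_prod_def)
  qed
  show ?thesis
  proof
    show "bij_betw (blk T b m) (Domain (adj T) \<times> Domain T) UNIV"
      using inj surj by (simp add: bij_betw_def M_def Dm_def)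
    show "\<exists>C. \<forall>p\<in>Domain (adj T) \<times> Domain T. norm p \<le> C * norm (blk T b m p)"
    proof (intro exI[of _ "1 / c0"] ballI)
      fix p assume "p \<in> Domain (adj T) \<times> Domain T"
      thus "norm p \<le> 1 / c0 * norm (blk T b m p)" using bnd[of p] by (simp only: M_def Dm_def)
    qed
  qed
qed



section \<open>Graph inner product and boundary data spaces\<close>

lemma graph_norm_eq: "graph_norm A u = norm (u, op_app A u)"
  by (simp add: graph_norm_def norm_prod_def)

lemma gi_Re: "Re (graph_inner A u v) = pip (u, op_app A u) (v, op_app A v)"
  by (simp add: graph_inner_def pip_def)

lemma gi_sym: "graph_inner A u v = cnj (graph_inner A v u)"
  by (simp add: graph_inner_def cinner_commute[of u v] cinner_commute[of "op_app A u"])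

lemma gi_self: "graph_inner A u u = complex_of_real ((graph_norm A u)\<^sup>2)"
  by (simp add: graph_inner_def graph_norm_def cinner_self_norm)

context
  fixes A :: "('a::chilbert \<times> 'b::chilbert) set"
  assumes L: "lin_op A"
begin

lemma gi_add_left: "u \<in> Domain A \<Longrightarrow> u' \<in> Domain A \<Longrightarrow>
    graph_inner A (u + u') v = graph_inner A u v + graph_inner A u' v"
  by (simp add: graph_inner_def op_app_add[OF L] cinner_add_left)

lemma gi_diff_left: "u \<in> Domain A \<Longrightarrow> u' \<in> Domain A \<Longrightarrow>
    graph_inner A (u - u') v = graph_inner A u v - graph_inner A u' v"
  by (simp add: graph_inner_def op_app_diff[OF L] cinner_diff_left)

lemma gi_add_right: "u \<in> Domain A \<Longrightarrow> u' \<in> Domain A \<Longrightarrow>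
    graph_inner A v (u + u') = graph_inner A v u + graph_inner A v u'"
  by (simp add: graph_inner_def op_app_add[OF L] cinner_add_right)

lemma gi_diff_right: "u \<in> Domain A \<Longrightarrow> u' \<in> Domain A \<Longrightarrow>
    graph_inner A v (u - u') = graph_inner A v u - graph_inner A v u'"
  by (simp add: graph_inner_def op_app_diff[OF L] cinner_diff_right)

lemma gi_scale_left: "u \<in> Domain A \<Longrightarrow> graph_inner A (c *\<^sub>C u) v = c * graph_inner A u v"
  by (simp add: graph_inner_def op_app_scale[OF L] cinner_scaleC_left algebra_simps)

lemma gi_scale_right: "u \<in> Domain A \<Longrightarrow> graph_inner A v (c *\<^sub>C u) = cnj c * graph_inner A v u"
  by (simp add: graph_inner_def op_app_scale[OF L] cinner_scaleC_right algebra_simps)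

lemma gi_self_zero: "graph_inner A u u = 0 \<Longrightarrow> u = 0"
proof -
  assume "graph_inner A u u = 0"
  hence "(graph_norm A u)\<^sup>2 = 0" by (simp add: gi_self)
  hence "norm (u, op_app A u) = 0" by (simp add: graph_norm_eq)
  thus "u = 0" by (simp add: zero_prod_def)
qed

end

context
  fixes A :: "('a::chilbert \<times> 'b::chilbert) set" and A0 :: "('a \<times> 'b) set"
  assumes L: "lin_op A" and L0: "lin_op A0" and C0: "closed A0" and S: "A0 \<subseteq> A"
begin

lemma dom_sub: "Domain A0 \<subseteq> Domain A" using S by blast

lemma op_app_sub: "x \<in> Domain A0 \<Longrightarrow> op_app A0 x = op_app A x"
  using op_app_in[OF L0] S op_app_eq[OF L] by (metis subsetD)

lemma BD_sub: "BD A A0 \<subseteq> Domain A" by (auto simp: BD_def)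

lemma BD_orth: "w \<in> BD A A0 \<Longrightarrow> v \<in> Domain A0 \<Longrightarrow> graph_inner A v w = 0"
  by (auto simp: BD_def)

lemma BD_orth': "w \<in> BD A A0 \<Longrightarrow> v \<in> Domain A0 \<Longrightarrow> graph_inner A w v = 0"
  using BD_orth gi_sym by (metis complex_cnj_zero)

lemma BD_add: "w \<in> BD A A0 \<Longrightarrow> w' \<in> BD A A0 \<Longrightarrow> w + w' \<in> BD A A0"
  unfolding BD_def using dom_add[OF L] gi_add_right[OF L] by auto

lemma BD_diff: "w \<in> BD A A0 \<Longrightarrow> w' \<in> BD A A0 \<Longrightarrow> w - w' \<in> BD A A0"
  unfolding BD_def using dom_diff[OF L] gi_diff_right[OF L] by auto

lemma BD_scale: "w \<in> BD A A0 \<Longrightarrow> c *\<^sub>C w \<in> BD A A0"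
  unfolding BD_def using dom_scale[OF L] gi_scale_right[OF L] by auto

lemma BD_inter: "w \<in> BD A A0 \<Longrightarrow> w \<in> Domain A0 \<Longrightarrow> w = 0"
  using BD_orth gi_self_zero[OF L] by blast

lemma BD_exists:
  assumes x: "x \<in> Domain A"
  shows "\<exists>w. w \<in> BD A A0 \<and> x - w \<in> Domain A0"
proof -
  obtain p where pA: "p \<in> A0" and po: "\<forall>r\<in>A0. pip ((x, op_app A x) - p) r = 0"
    using rhs.proj_exists[OF rhs_prod lin_rsubspace[OF L0] C0] by blast
  obtain v z where p: "p = (v, z)" by (cases p)
  have vD: "v \<in> Domain A0" using pA p by blast
  have z: "z = op_app A v" using op_app_eq[OF L] S pA p by blast
  define w where "w = x - v"
  have vA: "v \<in> Domain A" using vD dom_sub by blast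
  have wD: "w \<in> Domain A" unfolding w_def by (rule dom_diff[OF L x vA])
  have gw: "(x, op_app A x) - p = (w, op_app A w)"
    using op_app_diff[OF L x vA] by (simp add: p z w_def)
  have o: "Re (graph_inner A w v') = 0" if "v' \<in> Domain A0" for v'
  proof -
    have "(v', op_app A v') \<in> A0" using op_app_in[OF L0 that] op_app_sub[OF that] by simp
    hence "pip (w, op_app A w) (v', op_app A v') = 0" using po gw by metis
    thus ?thesis by (simp add: gi_Re)
  qed
  have "graph_inner A v' w = 0" if v': "v' \<in> Domain A0" for v'
  proof -
    have iv: "\<i> *\<^sub>C v' \<in> Domain A0" using dom_scale[OF L0 v'] .
    have v'A: "v' \<in> Domain A" using v' dom_sub by blast
    have "Re (graph_inner A w v') = 0" "Re (graph_inner A w (\<i> *\<^sub>C v')) = 0" using o v' iv by auto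
    hence "Re (graph_inner A v' w) = 0" "Re (graph_inner A (\<i> *\<^sub>C v') w) = 0"
      by (simp_all add: gi_sym[of A v' w] gi_sym[of A "\<i> *\<^sub>C v'" w])
    hence "Re (graph_inner A v' w) = 0" "Re (\<i> * graph_inner A v' w) = 0"
      using gi_scale_left[OF L v'A] by auto
    thus ?thesis by (simp add: complex_eq_iff)
  qed
  hence "w \<in> BD A A0" using wD by (simp add: BD_def)
  moreover have "x - w \<in> Domain A0" using vD by (simp add: w_def)
  ultimately show ?thesis by blast
qed

lemma proj_char:
  assumes x: "x \<in> Domain A" and w: "w \<in> BD A A0" and xw: "x - w \<in> Domain A0"
  shows "proj_BD A A0 x = w"
  unfolding proj_BD_def
proof (rule the_equality)
  show "w \<in> BD A A0 \<and> (\<forall>v\<in>BD A A0. graph_inner A (x - w) v = 0)"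
    using w xw BD_orth by blast
next
  fix w' assume H: "w' \<in> BD A A0 \<and> (\<forall>v\<in>BD A A0. graph_inner A (x - w') v = 0)"
  have wA: "w \<in> Domain A" "w' \<in> Domain A" using w H BD_sub by auto
  have d: "w - w' \<in> BD A A0" using BD_diff w H by blast
  have "graph_inner A (x - w') (w - w') = 0" using H d by blast
  moreover have "graph_inner A (x - w) (w - w') = 0" using BD_orth[OF d xw] .
  ultimately have "graph_inner A ((x - w') - (x - w)) (w - w') = 0"
    using gi_diff_left[OF L] dom_diff[OF L] x wA by simp
  hence "graph_inner A (w - w') (w - w') = 0" by simp
  hence "w - w' = 0" by (rule gi_self_zero[OF L])
  thus "w' = w" by simp
qed

lemma proj_prop:
  assumes x: "x \<in> Domain A"
  shows "proj_BD A A0 x \<in> BD A A0 \<and> x - proj_BD A A0 x \<in> Domain A0"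
  using BD_exists[OF x] proj_char[OF x] by metis

lemma proj_add:
  assumes "x \<in> Domain A" "y \<in> Domain A"
  shows "proj_BD A A0 (x + y) = proj_BD A A0 x + proj_BD A A0 y"
proof (rule proj_char)
  show "x + y \<in> Domain A" using dom_add[OF L] assms .
  show "proj_BD A A0 x + proj_BD A A0 y \<in> BD A A0" using BD_add proj_prop assms by blast
  have "(x + y) - (proj_BD A A0 x + proj_BD A A0 y) = (x - proj_BD A A0 x) + (y - proj_BD A A0 y)"
    by simp
  thus "x + y - (proj_BD A A0 x + proj_BD A A0 y) \<in> Domain A0"
    using dom_add[OF L0] proj_prop assms by metis
qed

lemma proj_scale:
  assumes "x \<in> Domain A"
  shows "proj_BD A A0 (c *\<^sub>C x) = c *\<^sub>C proj_BD A A0 x"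
proof (rule proj_char)
  show "c *\<^sub>C x \<in> Domain A" using dom_scale[OF L] assms .
  show "c *\<^sub>C proj_BD A A0 x \<in> BD A A0" using BD_scale proj_prop assms by blast
  have "c *\<^sub>C x - c *\<^sub>C proj_BD A A0 x = c *\<^sub>C (x - proj_BD A A0 x)" by (simp add: scaleC_diff_right)
  thus "c *\<^sub>C x - c *\<^sub>C proj_BD A A0 x \<in> Domain A0"
    using dom_scale[OF L0] proj_prop assms by metis
qed

lemma proj_contr:
  assumes x: "x \<in> Domain A"
  shows "graph_norm A (proj_BD A A0 x) \<le> graph_norm A x"
proof -
  define w where "w = proj_BD A A0 x"
  define v where "v = x - w"
  have w: "w \<in> BD A A0" and v: "v \<in> Domain A0" using proj_prop[OF x] by (auto simp: w_def v_def)
  have wA: "w \<in> Domain A" and vA: "v \<in> Domain A" using w v BD_sub dom_sub by auto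
  have xe: "x = w + v" by (simp add: v_def)
  have "graph_inner A x x = graph_inner A w w + graph_inner A v v + graph_inner A w v + graph_inner A v w"
    unfolding xe using gi_add_left[OF L] gi_add_right[OF L] wA vA dom_add[OF L] by (simp add: algebra_simps)
  also have "\<dots> = graph_inner A w w + graph_inner A v v" using BD_orth[OF w v] BD_orth'[OF w v] by simp
  finally have "Re (graph_inner A x x) = Re (graph_inner A w w) + Re (graph_inner A v v)" by simp
  hence "(graph_norm A x)\<^sup>2 = (graph_norm A w)\<^sup>2 + (graph_norm A v)\<^sup>2"
    by (simp only: gi_self Re_complex_of_real)
  hence "(graph_norm A w)\<^sup>2 \<le> (graph_norm A x)\<^sup>2" by simp
  moreover have "0 \<le> graph_norm A x" by (simp add: graph_norm_def)
  ultimately show ?thesis unfolding w_def by (rule power2_le_imp_le)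
qed

end



lemma neg_mono: "A \<subseteq> B \<Longrightarrow> neg_op A \<subseteq> neg_op B"
  by (auto simp: neg_op_iff)

definition solP :: "('a::chilbert \<times> 'b::chilbert) set \<Rightarrow> ('b \<times> 'a) set
    \<Rightarrow> ('b \<Rightarrow> 'b) \<Rightarrow> ('a \<Rightarrow> 'a) \<Rightarrow> 'a \<Rightarrow> 'a \<Rightarrow> bool" where
  "solP G D a m u0 u \<longleftrightarrow> u \<in> Domain G \<and> a (op_app G u) \<in> Domain D
       \<and> m u - op_app D (a (op_app G u)) = 0 \<and> u - u0 \<in> Domain (ringG D)"

lemma dtn_sol_alt: "dtn_sol G D a m u0 = (THE u. solP G D a m u0 u)"
  by (simp add: dtn_sol_def solP_def)

context
  fixes G :: "('a::chilbert \<times> 'b::chilbert) set" and D :: "('b \<times> 'a) set"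
    and a :: "'b \<Rightarrow> 'b" and m :: "'a \<Rightarrow> 'a"
  assumes cG: "closed_op G" and dG: "densely_defined G"
    and cD: "closed_op D" and dD: "densely_defined D"
    and sub: "neg_op (adj G) \<subseteq> D"
    and ba: "bounded_clop a" and ca: "coercive a"
    and bm: "bounded_clop m" and cm: "coercive m"
begin

lemma LG: "lin_op G" using cG by (simp add: closed_op_def)
lemma CG: "closed G" using cG by (simp add: closed_op_def)
lemma LD: "lin_op D" using cD by (simp add: closed_op_def)
lemma CD: "closed D" using cD by (simp add: closed_op_def)
lemma LaG: "lin_op (adj G)" by (rule lin_adj[OF dG])
lemma LaD: "lin_op (adj D)" by (rule lin_adj[OF dD])
lemma LG0: "lin_op (ringG D)" unfolding ringG_def by (rule lin_neg[OF LaD])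
lemma CG0: "closed (ringG D)" unfolding ringG_def by (rule closed_neg[OF closed_adj])
lemma LD0: "lin_op (ringD G)" unfolding ringD_def by (rule lin_neg[OF LaG])
lemma CD0: "closed (ringD G)" unfolding ringD_def by (rule closed_neg[OF closed_adj])
lemma aaG: "adj (adj G) = G" using adj_adj_sub[OF LG CG] adj_adj_sup by blast
lemma SD0: "ringD G \<subseteq> D" using sub by (simp add: ringD_def)
lemma SG0: "ringG D \<subseteq> G"
proof -
  have "adj D \<subseteq> adj (neg_op (adj G))" using adj_anti[OF sub] .
  also have "\<dots> = neg_op G" by (simp add: adj_neg aaG)
  finally have "neg_op (adj D) \<subseteq> neg_op (neg_op G)" by (rule neg_mono)
  thus ?thesis by (simp add: ringG_def neg_neg)
qed
lemma adjD0: "adj (ringD G) = neg_op G" by (simp add: ringD_def adj_neg aaG)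
lemma BA: "bounded_clop (inv a)" by (rule inv_bc[OF ba ca])
lemma CA: "coercive (inv a)" by (rule inv_co[OF ba ca])

lemma G0app: "x \<in> Domain (ringG D) \<Longrightarrow> op_app (ringG D) x = op_app G x"
  by (rule op_app_sub[OF LG LG0 CG0 SG0])
lemma D0app: "x \<in> Domain (ringD G) \<Longrightarrow> op_app (ringD G) x = op_app D x"
  by (rule op_app_sub[OF LD LD0 CD0 SD0])
lemma G0dom: "x \<in> Domain (ringG D) \<Longrightarrow> x \<in> Domain G" using SG0 by blast
lemma D0dom: "x \<in> Domain (ringD G) \<Longrightarrow> x \<in> Domain D" using SD0 by blast

lemma M1:
  "bij_betw (mat1 G D a m) (Domain (ringG D) \<times> Domain D) UNIV
   \<and> (\<exists>C. \<forall>p\<in>Domain (ringG D) \<times> Domain D. norm p \<le> C * norm (mat1 G D a m p))"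
proof -
  have dom: "Domain (ringG D) = Domain (adj D)" by (simp add: ringG_def Domain_neg)
  have eq: "mat1 G D a m p = blk D (inv a) m p" if "p \<in> Domain (adj D) \<times> Domain D" for p
    using that by (cases p) (simp add: mat1_def blk_def ringG_def op_app_neg[OF LaD])
  from block[OF LD CD LaD BA CA bm cm] show ?thesis
    unfolding dom using eq bij_betw_cong[of "Domain (adj D) \<times> Domain D" "mat1 G D a m" "blk D (inv a) m"]
    by auto
qed

lemma M2:
  "bij_betw (mat2 G D a m) (Domain G \<times> Domain (ringD G)) UNIV
   \<and> (\<exists>C. \<forall>p\<in>Domain G \<times> Domain (ringD G). norm p \<le> C * norm (mat2 G D a m p))"
proof -
  have dom: "Domain G = Domain (adj (ringD G))" by (simp add: adjD0 Domain_neg)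
  have LA: "lin_op (adj (ringD G))" by (simp add: adjD0 lin_neg[OF LG])
  have eq: "mat2 G D a m p = blk (ringD G) (inv a) m p" if "p \<in> Domain (adj (ringD G)) \<times> Domain (ringD G)" for p
    using that by (cases p) (simp add: mat2_def blk_def adjD0 op_app_neg[OF LG] Domain_neg)
  from block[OF LD0 CD0 LA BA CA bm cm] show ?thesis
    unfolding dom using eq bij_betw_cong[of "Domain (adj (ringD G)) \<times> Domain (ringD G)" "mat2 G D a m" "blk (ringD G) (inv a) m"]
    by auto
qed

lemma inv1:
  "the_inv_into (Domain (ringG D) \<times> Domain D) (mat1 G D a m) y \<in> Domain (ringG D) \<times> Domain D
   \<and> mat1 G D a m (the_inv_into (Domain (ringG D) \<times> Domain D) (mat1 G D a m) y) = y"
proof -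
  have b: "bij_betw (mat1 G D a m) (Domain (ringG D) \<times> Domain D) UNIV" using M1 by blast
  show ?thesis
    using the_inv_into_into[of "mat1 G D a m" "Domain (ringG D) \<times> Domain D" y]
      f_the_inv_into_f_bij_betw[OF b] b by (auto simp: bij_betw_def)
qed

lemma inv2:
  "the_inv_into (Domain G \<times> Domain (ringD G)) (mat2 G D a m) y \<in> Domain G \<times> Domain (ringD G)
   \<and> mat2 G D a m (the_inv_into (Domain G \<times> Domain (ringD G)) (mat2 G D a m) y) = y"
proof -
  have b: "bij_betw (mat2 G D a m) (Domain G \<times> Domain (ringD G)) UNIV" using M2 by blast
  show ?thesis
    using the_inv_into_into[of "mat2 G D a m" "Domain G \<times> Domain (ringD G)" y]
      f_the_inv_into_f_bij_betw[OF b] b by (auto simp: bij_betw_def)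
qed

lemma mat1_zero: "mat1 G D a m (0, 0) = 0"
  by (simp add: mat1_def op_app_zero[OF LD] op_app_zero[OF LG0] bc_zero[OF bm] bc_zero[OF BA] zero_prod_def)

lemma mat2_zero: "mat2 G D a m (0, 0) = 0"
  by (simp add: mat2_def op_app_zero[OF LG] op_app_zero[OF LD0] bc_zero[OF bm] bc_zero[OF BA] zero_prod_def)

lemma sol_unique:
  assumes P1: "solP G D a m u0 u1" and P2: "solP G D a m u0 u2"
  shows "u1 = u2"
proof -
  have u1: "u1 \<in> Domain G" "a (op_app G u1) \<in> Domain D" "m u1 - op_app D (a (op_app G u1)) = 0"
      "u1 - u0 \<in> Domain (ringG D)" using P1 by (auto simp: solP_def)
  have u2: "u2 \<in> Domain G" "a (op_app G u2) \<in> Domain D" "m u2 - op_app D (a (op_app G u2)) = 0"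
      "u2 - u0 \<in> Domain (ringG D)" using P2 by (auto simp: solP_def)
  define x where "x = u1 - u2"
  have x0: "x \<in> Domain (ringG D)"
  proof -
    have "(u1 - u0) - (u2 - u0) \<in> Domain (ringG D)" by (rule dom_diff[OF LG0 u1(4) u2(4)])
    thus ?thesis by (simp add: x_def)
  qed
  have xG: "x \<in> Domain G" unfolding x_def by (rule dom_diff[OF LG u1(1) u2(1)])
  have Gx: "op_app G x = op_app G u1 - op_app G u2" unfolding x_def by (rule op_app_diff[OF LG u1(1) u2(1)])
  define q where "q = a (op_app G x)"
  have q: "q = a (op_app G u1) - a (op_app G u2)" by (simp add: q_def Gx bc_diff[OF ba])
  have qD: "q \<in> Domain D" unfolding q by (rule dom_diff[OF LD u1(2) u2(2)])
  have "op_app D q = op_app D (a (op_app G u1)) - op_app D (a (op_app G u2))"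
    unfolding q by (rule op_app_diff[OF LD u1(2) u2(2)])
  also have "\<dots> = m u1 - m u2" using u1(3) u2(3) by simp
  also have "\<dots> = m x" by (simp add: x_def bc_diff[OF bm])
  finally have Dq: "op_app D q = m x" .
  have Dq': "op_app D (a (op_app G x)) = m x" using Dq by (simp add: q_def)
  have "mat1 G D a m (x, q) = (0, 0)"
    unfolding q_def by (simp add: mat1_def Dq' G0app[OF x0] inv_a[OF ba ca])
  hence "mat1 G D a m (x, q) = mat1 G D a m (0, 0)" by (simp add: mat1_zero zero_prod_def)
  moreover have "(x, q) \<in> Domain (ringG D) \<times> Domain D" using x0 qD by simp
  moreover have "(0, 0) \<in> Domain (ringG D) \<times> Domain D" using dom_zero[OF LG0] dom_zero[OF LD] by simp
  moreover have "inj_on (mat1 G D a m) (Domain (ringG D) \<times> Domain D)" using M1 by (simp add: bij_betw_def)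
  ultimately have "(x, q) = (0, 0)" by (meson inj_onD)
  thus ?thesis by (simp add: x_def)
qed

lemma sol_exists:
  assumes u0: "u0 \<in> Domain G"
  defines "p \<equiv> the_inv_into (Domain (ringG D) \<times> Domain D) (mat1 G D a m) (- m u0, op_app G u0)"
  shows "solP G D a m u0 (fst p + u0) \<and> a (op_app G (fst p + u0)) = snd p"
proof -
  have pin: "p \<in> Domain (ringG D) \<times> Domain D" "mat1 G D a m p = (- m u0, op_app G u0)"
    using inv1 unfolding p_def by blast+
  obtain w q where p: "p = (w, q)" by (cases p)
  have d: "w \<in> Domain (ringG D)" "q \<in> Domain D" using pin(1) p by auto
  have e: "mat1 G D a m (w, q) = (- m u0, op_app G u0)" using pin(2) p by simp
  hence e1: "m w - op_app D q = - m u0" and e2: "- op_app (ringG D) w + inv a q = op_app G u0"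
    by (auto simp: mat1_def)
  have wG: "w \<in> Domain G" by (rule G0dom[OF d(1)])
  have uG: "w + u0 \<in> Domain G" by (rule dom_add[OF LG wG u0])
  have Gu: "op_app G (w + u0) = op_app G w + op_app G u0" by (rule op_app_add[OF LG wG u0])
  have "inv a q = (- op_app (ringG D) w + inv a q) + op_app (ringG D) w" by simp
  also have "\<dots> = op_app G u0 + op_app G w" using e2 G0app[OF d(1)] by simp
  also have "\<dots> = op_app G (w + u0)" using Gu by (simp add: add.commute)
  finally have "inv a q = op_app G (w + u0)" .
  hence aq: "a (op_app G (w + u0)) = q" by (metis a_inv[OF ba ca])
  have "m (w + u0) - op_app D (a (op_app G (w + u0))) = m w + m u0 - op_app D q"
    by (simp only: aq bc_add[OF bm])
  also have "\<dots> = (m w - op_app D q) + m u0" by (simp add: algebra_simps)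
  also have "\<dots> = 0" using e1 by simp
  finally have "m (w + u0) - op_app D (a (op_app G (w + u0))) = 0" .
  moreover have "(w + u0) - u0 \<in> Domain (ringG D)" using d(1) by simp
  ultimately show ?thesis using uG aq d(2) by (simp add: solP_def p)
qed

lemma sol_prop: "u0 \<in> Domain G \<Longrightarrow> solP G D a m u0 (dtn_sol G D a m u0)"
  unfolding dtn_sol_alt by (rule theI') (use sol_exists sol_unique in blast)

lemma sol_eq: "solP G D a m u0 u \<Longrightarrow> dtn_sol G D a m u0 = u"
  unfolding dtn_sol_alt by (rule the_equality) (use sol_unique in blast)+

lemma DtN_formula:
  assumes u0: "u0 \<in> Domain G"
  shows "DtN G D a m u0 = proj_BD D (ringD G)
            (snd (the_inv_into (Domain (ringG D) \<times> Domain D) (mat1 G D a m) (- m u0, op_app G u0)))"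
proof -
  define p where "p = the_inv_into (Domain (ringG D) \<times> Domain D) (mat1 G D a m) (- m u0, op_app G u0)"
  have "solP G D a m u0 (fst p + u0) \<and> a (op_app G (fst p + u0)) = snd p"
    using sol_exists[OF u0] by (simp add: p_def)
  hence "dtn_sol G D a m u0 = fst p + u0" "a (op_app G (fst p + u0)) = snd p" using sol_eq by auto
  thus ?thesis by (simp add: DtN_def p_def)
qed


lemma sol_add:
  assumes u0: "u0 \<in> Domain G" and v0: "v0 \<in> Domain G"
  shows "dtn_sol G D a m (u0 + v0) = dtn_sol G D a m u0 + dtn_sol G D a m v0"
proof (rule sol_eq)
  define u v where "u = dtn_sol G D a m u0" and "v = dtn_sol G D a m v0"
  have su: "u \<in> Domain G" "a (op_app G u) \<in> Domain D" "m u - op_app D (a (op_app G u)) = 0"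
      "u - u0 \<in> Domain (ringG D)" using sol_prop[OF u0] by (auto simp: solP_def u_def)
  have sv: "v \<in> Domain G" "a (op_app G v) \<in> Domain D" "m v - op_app D (a (op_app G v)) = 0"
      "v - v0 \<in> Domain (ringG D)" using sol_prop[OF v0] by (auto simp: solP_def v_def)
  have g: "a (op_app G (u + v)) = a (op_app G u) + a (op_app G v)"
    by (simp add: op_app_add[OF LG su(1) sv(1)] bc_add[OF ba])
  have "m (u + v) - op_app D (a (op_app G (u + v)))
      = (m u - op_app D (a (op_app G u))) + (m v - op_app D (a (op_app G v)))"
    by (simp add: g op_app_add[OF LD su(2) sv(2)] bc_add[OF bm] algebra_simps)
  also have "\<dots> = 0" using su(3) sv(3) by simp
  finally have e: "m (u + v) - op_app D (a (op_app G (u + v))) = 0" .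
  have eq: "(u + v) - (u0 + v0) = (u - u0) + (v - v0)" by simp
  have d: "(u + v) - (u0 + v0) \<in> Domain (ringG D)" unfolding eq by (rule dom_add[OF LG0 su(4) sv(4)])
  show "solP G D a m (u0 + v0) (dtn_sol G D a m u0 + dtn_sol G D a m v0)"
    unfolding solP_def u_def[symmetric] v_def[symmetric]
    using dom_add[OF LG su(1) sv(1)] dom_add[OF LD su(2) sv(2)] g e d by simp
qed

lemma sol_scale:
  assumes u0: "u0 \<in> Domain G"
  shows "dtn_sol G D a m (c *\<^sub>C u0) = c *\<^sub>C dtn_sol G D a m u0"
proof (rule sol_eq)
  define u where "u = dtn_sol G D a m u0"
  have su: "u \<in> Domain G" "a (op_app G u) \<in> Domain D" "m u - op_app D (a (op_app G u)) = 0"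
      "u - u0 \<in> Domain (ringG D)" using sol_prop[OF u0] by (auto simp: solP_def u_def)
  have g: "a (op_app G (c *\<^sub>C u)) = c *\<^sub>C a (op_app G u)"
    by (simp add: op_app_scale[OF LG su(1)] bc_scaleC[OF ba])
  have "m (c *\<^sub>C u) - op_app D (a (op_app G (c *\<^sub>C u))) = c *\<^sub>C (m u - op_app D (a (op_app G u)))"
    by (simp add: g op_app_scale[OF LD su(2)] bc_scaleC[OF bm] scaleC_diff_right)
  also have "\<dots> = 0" using su(3) by simp
  finally have e: "m (c *\<^sub>C u) - op_app D (a (op_app G (c *\<^sub>C u))) = 0" .
  have eq: "c *\<^sub>C u - c *\<^sub>C u0 = c *\<^sub>C (u - u0)" by (simp add: scaleC_diff_right)
  have d: "c *\<^sub>C u - c *\<^sub>C u0 \<in> Domain (ringG D)" unfolding eq by (rule dom_scale[OF LG0 su(4)])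
  show "solP G D a m (c *\<^sub>C u0) (c *\<^sub>C dtn_sol G D a m u0)"
    unfolding solP_def u_def[symmetric]
    using dom_scale[OF LG su(1)] dom_scale[OF LD su(2)] g e d by simp
qed

lemma DtN_alt: "u0 \<in> Domain G \<Longrightarrow> a (op_app G (dtn_sol G D a m u0)) \<in> Domain D"
  using sol_prop by (auto simp: solP_def)

lemma DtN_add:
  assumes u0: "u0 \<in> Domain G" and v0: "v0 \<in> Domain G"
  shows "DtN G D a m (u0 + v0) = DtN G D a m u0 + DtN G D a m v0"
proof -
  have g: "a (op_app G (dtn_sol G D a m u0 + dtn_sol G D a m v0))
      = a (op_app G (dtn_sol G D a m u0)) + a (op_app G (dtn_sol G D a m v0))"
    using sol_prop[OF u0] sol_prop[OF v0]
    by (simp add: solP_def op_app_add[OF LG] bc_add[OF ba])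
  show ?thesis
    unfolding DtN_def sol_add[OF u0 v0] g
    by (rule proj_add[OF LD LD0 CD0 SD0 DtN_alt[OF u0] DtN_alt[OF v0]])
qed

lemma DtN_scale:
  assumes u0: "u0 \<in> Domain G"
  shows "DtN G D a m (c *\<^sub>C u0) = c *\<^sub>C DtN G D a m u0"
proof -
  have g: "a (op_app G (c *\<^sub>C dtn_sol G D a m u0)) = c *\<^sub>C a (op_app G (dtn_sol G D a m u0))"
    using sol_prop[OF u0] by (simp add: solP_def op_app_scale[OF LG] bc_scaleC[OF ba])
  show ?thesis
    unfolding DtN_def sol_scale[OF u0] g
    by (rule proj_scale[OF LD LD0 CD0 SD0 DtN_alt[OF u0]])
qed

lemma DtN_BD: "u0 \<in> Domain G \<Longrightarrow> DtN G D a m u0 \<in> BD D (ringD G)"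
  unfolding DtN_def using proj_prop[OF LD LD0 CD0 SD0 DtN_alt] by blast

lemma BDG_dom: "u0 \<in> BD G (ringG D) \<Longrightarrow> u0 \<in> Domain G" using BD_sub[OF LG LG0 CG0 SG0] by blast
lemma BDD_dom: "q0 \<in> BD D (ringD G) \<Longrightarrow> q0 \<in> Domain D" using BD_sub[OF LD LD0 CD0 SD0] by blast

lemma DtN_zero:
  assumes u0: "u0 \<in> BD G (ringG D)" and z: "DtN G D a m u0 = 0"
  shows "u0 = 0"
proof -
  have u0G: "u0 \<in> Domain G" by (rule BDG_dom[OF u0])
  define u where "u = dtn_sol G D a m u0"
  have su: "u \<in> Domain G" "a (op_app G u) \<in> Domain D" "m u - op_app D (a (op_app G u)) = 0"
      "u - u0 \<in> Domain (ringG D)" using sol_prop[OF u0G] by (auto simp: solP_def u_def)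
  define q where "q = a (op_app G u)"
  have "q - proj_BD D (ringD G) q \<in> Domain (ringD G)" using proj_prop[OF LD LD0 CD0 SD0 su(2)] by (simp add: q_def)
  moreover have "proj_BD D (ringD G) q = 0" using z by (simp add: DtN_def q_def u_def)
  ultimately have q0: "q \<in> Domain (ringD G)" by simp
  have Dq: "op_app D q = m u" using su(3) by (simp add: q_def)
  have "mat2 G D a m (u, q) = (0, 0)"
    by (simp add: mat2_def D0app[OF q0] Dq) (simp add: q_def inv_a[OF ba ca])
  hence "mat2 G D a m (u, q) = mat2 G D a m (0, 0)" by (simp add: mat2_zero zero_prod_def)
  moreover have "(u, q) \<in> Domain G \<times> Domain (ringD G)" using su(1) q0 by simp
  moreover have "(0, 0) \<in> Domain G \<times> Domain (ringD G)" using dom_zero[OF LG] dom_zero[OF LD0] by simp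
  moreover have "inj_on (mat2 G D a m) (Domain G \<times> Domain (ringD G))" using M2 by (simp add: bij_betw_def)
  ultimately have "(u, q) = (0, 0)" by (meson inj_onD)
  hence "- u0 \<in> Domain (ringG D)" using su(4) by simp
  hence "- (- u0) \<in> Domain (ringG D)" using lin_minus[OF LG0] by blast
  hence "u0 \<in> Domain (ringG D)" by simp
  thus ?thesis by (rule BD_inter[OF LG LG0 CG0 SG0 u0])
qed

lemma DtN_surj:
  assumes q0: "q0 \<in> BD D (ringD G)"
  defines "p \<equiv> the_inv_into (Domain G \<times> Domain (ringD G)) (mat2 G D a m) (op_app D q0, - inv a q0)"
  shows "proj_BD G (ringG D) (fst p) \<in> BD G (ringG D)
    \<and> DtN G D a m (proj_BD G (ringG D) (fst p)) = q0
    \<and> dtn_sol G D a m (proj_BD G (ringG D) (fst p)) = fst p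
    \<and> op_app G (fst p) = inv a (snd p + q0)"
proof -
  have pin: "p \<in> Domain G \<times> Domain (ringD G)" "mat2 G D a m p = (op_app D q0, - inv a q0)"
    using inv2 unfolding p_def by blast+
  obtain w r where p: "p = (w, r)" by (cases p)
  have d: "w \<in> Domain G" "r \<in> Domain (ringD G)" using pin(1) p by auto
  have rD: "r \<in> Domain D" by (rule D0dom[OF d(2)])
  have q0D: "q0 \<in> Domain D" by (rule BDD_dom[OF q0])
  have e: "mat2 G D a m (w, r) = (op_app D q0, - inv a q0)" using pin(2) p by simp
  hence e1: "m w - op_app (ringD G) r = op_app D q0" and e2: "- op_app G w + inv a r = - inv a q0"
    by (auto simp: mat2_def)
  have Gw: "op_app G w = inv a (r + q0)"
  proof -
    have "op_app G w = inv a r - (- op_app G w + inv a r)" by (simp add: algebra_simps)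
    also have "\<dots> = inv a r + inv a q0" using e2 by simp
    finally show ?thesis by (simp add: bc_add[OF BA])
  qed
  have aGw: "a (op_app G w) = r + q0" by (simp add: Gw a_inv[OF ba ca])
  define u0 where "u0 = proj_BD G (ringG D) w"
  have pu: "u0 \<in> BD G (ringG D)" "w - u0 \<in> Domain (ringG D)"
    using proj_prop[OF LG LG0 CG0 SG0 d(1)] by (auto simp: u0_def)
  have "m w - op_app D (a (op_app G w)) = m w - (op_app D r + op_app D q0)"
    by (simp only: aGw op_app_add[OF LD rD q0D])
  also have "\<dots> = m w - op_app D r - op_app D q0" by (simp add: algebra_simps)
  also have "\<dots> = 0" using e1 D0app[OF d(2)] by simp
  finally have "solP G D a m u0 w" using d(1) aGw dom_add[OF LD rD q0D] pu(2) by (simp add: solP_def)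
  hence sol: "dtn_sol G D a m u0 = w" by (rule sol_eq)
  have "DtN G D a m u0 = proj_BD D (ringD G) (r + q0)" by (simp add: DtN_def sol aGw)
  also have "\<dots> = q0"
    by (rule proj_char[OF LD LD0 CD0 SD0 dom_add[OF LD rD q0D] q0]) (simp add: d(2))
  finally show ?thesis using pu(1) sol Gw by (simp add: p u0_def)
qed

lemma DtN_inj: "inj_on (DtN G D a m) (BD G (ringG D))"
proof (rule inj_onI)
  fix u v assume u: "u \<in> BD G (ringG D)" and v: "v \<in> BD G (ringG D)" and e: "DtN G D a m u = DtN G D a m v"
  have d: "u - v \<in> BD G (ringG D)" by (rule BD_diff[OF LG LG0 CG0 SG0 u v])
  have "DtN G D a m u = DtN G D a m ((u - v) + v)" by simp
  also have "\<dots> = DtN G D a m (u - v) + DtN G D a m v" by (rule DtN_add[OF BDG_dom[OF d] BDG_dom[OF v]])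
  finally have "DtN G D a m (u - v) = 0" using e by simp
  hence "u - v = 0" by (rule DtN_zero[OF d])
  thus "u = v" by simp
qed

lemma arith_bound:
  fixes C K N P X :: real
  assumes "0 \<le> C" "0 \<le> K" "0 \<le> N" "P \<le> C * ((K + 1) * N)" "X \<le> P + K * (P + N)"
  shows "X \<le> (C * (K + 1) + K * (C * (K + 1) + 1)) * N"
proof -
  have "K * (P + N) \<le> K * (C * ((K + 1) * N) + N)"
    using assms by (intro mult_left_mono) auto
  hence "X \<le> C * ((K + 1) * N) + K * (C * ((K + 1) * N) + N)" using assms by linarith
  also have "\<dots> = (C * (K + 1) + K * (C * (K + 1) + 1)) * N" by (simp add: algebra_simps)
  finally show ?thesis .
qed


lemma DtN_bound: "\<exists>C. \<forall>u0\<in>BD G (ringG D). graph_norm D (DtN G D a m u0) \<le> C * graph_norm G u0"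
proof -
  obtain C1 where C1: "\<forall>p\<in>Domain (ringG D) \<times> Domain D. norm p \<le> C1 * norm (mat1 G D a m p)"
    using M1 by blast
  obtain Km where Km: "Km > 0" "\<And>x. norm (m x) \<le> Km * norm x" using bc_bound[OF bm] by blast
  have "graph_norm D (DtN G D a m u0) \<le> (\<bar>C1\<bar> * (Km + 1) + Km * (\<bar>C1\<bar> * (Km + 1) + 1)) * graph_norm G u0"
    if u0: "u0 \<in> BD G (ringG D)" for u0
  proof -
    have u0G: "u0 \<in> Domain G" by (rule BDG_dom[OF u0])
    define p where "p = the_inv_into (Domain (ringG D) \<times> Domain D) (mat1 G D a m) (- m u0, op_app G u0)"
    have pin: "p \<in> Domain (ringG D) \<times> Domain D" "mat1 G D a m p = (- m u0, op_app G u0)"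
      using inv1 unfolding p_def by blast+
    obtain w q where p: "p = (w, q)" by (cases p)
    have se: "solP G D a m u0 (w + u0)" "a (op_app G (w + u0)) = q"
      using sol_exists[OF u0G] unfolding p_def[symmetric] p by simp_all
    have sol: "dtn_sol G D a m u0 = w + u0" by (rule sol_eq[OF se(1)])
    have qD: "q \<in> Domain D" using pin(1) p by auto
    have Dq: "op_app D q = m (w + u0)" using se by (simp add: solP_def)
    have DtN: "DtN G D a m u0 = proj_BD D (ringD G) q" by (simp add: DtN_def sol se(2))
    define N where "N = graph_norm G u0"
    have N: "norm u0 \<le> N" "norm (op_app G u0) \<le> N" "0 \<le> N"
      by (simp_all add: N_def graph_norm_eq norm_fst_le norm_snd_le)
    define P where "P = norm (w, q)"
    have P: "norm w \<le> P" "norm q \<le> P" by (simp_all add: P_def norm_fst_le norm_snd_le)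
    have h: "norm p \<le> C1 * norm (mat1 G D a m p)" using C1 pin(1) by blast
    have "P \<le> C1 * norm (- m u0, op_app G u0)" using h unfolding pin(2) by (simp add: P_def p)
    also have "\<dots> \<le> \<bar>C1\<bar> * norm (- m u0, op_app G u0)" by (rule mult_right_mono) auto
    also have "\<dots> \<le> \<bar>C1\<bar> * ((Km + 1) * N)"
    proof (rule mult_left_mono)
      have "norm (- m u0, op_app G u0) \<le> norm (- m u0) + norm (op_app G u0)" by (rule norm_Pair_le)
      also have "\<dots> \<le> Km * norm u0 + norm (op_app G u0)" using Km(2)[of u0] by simp
      also have "\<dots> \<le> Km * N + N" using mult_left_mono[OF N(1), of Km] Km(1) N(2) by linarith
      finally show "norm (- m u0, op_app G u0) \<le> (Km + 1) * N" by (simp add: algebra_simps)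
    qed simp
    finally have PB: "P \<le> \<bar>C1\<bar> * ((Km + 1) * N)" .
    have "graph_norm D (DtN G D a m u0) \<le> graph_norm D q"
      unfolding DtN by (rule proj_contr[OF LD LD0 CD0 SD0 qD])
    also have "\<dots> = norm (q, m (w + u0))" by (simp add: graph_norm_eq Dq)
    also have "\<dots> \<le> norm q + norm (m (w + u0))" by (rule norm_Pair_le)
    also have "\<dots> \<le> P + Km * (P + N)"
    proof -
      have "norm (m (w + u0)) \<le> Km * norm (w + u0)" by (rule Km(2))
      also have "\<dots> \<le> Km * (P + N)"
        using norm_triangle_ineq[of w u0] P(1) N(1) Km(1) by (intro mult_left_mono) auto
      finally show ?thesis using P(2) by linarith
    qed
    finally show ?thesis unfolding N_def[symmetric] using arith_bound[OF _ _ N(3) PB] Km(1) by auto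
  qed
  thus ?thesis by blast
qed

lemma DtN_lower: "\<exists>C. \<forall>u0\<in>BD G (ringG D). graph_norm G u0 \<le> C * graph_norm D (DtN G D a m u0)"
proof -
  obtain C2 where C2: "\<forall>p\<in>Domain G \<times> Domain (ringD G). norm p \<le> C2 * norm (mat2 G D a m p)"
    using M2 by blast
  obtain L where L: "L > 0" "\<And>x. norm (inv a x) \<le> L * norm x" using bc_bound[OF BA] by blast
  have "graph_norm G u0 \<le> (\<bar>C2\<bar> * (L + 1) + L * (\<bar>C2\<bar> * (L + 1) + 1)) * graph_norm D (DtN G D a m u0)"
    if u0: "u0 \<in> BD G (ringG D)" for u0
  proof -
    define q0 where "q0 = DtN G D a m u0"
    have q0: "q0 \<in> BD D (ringD G)" unfolding q0_def by (rule DtN_BD[OF BDG_dom[OF u0]])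
    define p where "p = the_inv_into (Domain G \<times> Domain (ringD G)) (mat2 G D a m) (op_app D q0, - inv a q0)"
    have pin: "p \<in> Domain G \<times> Domain (ringD G)" "mat2 G D a m p = (op_app D q0, - inv a q0)"
      using inv2 unfolding p_def by blast+
    obtain w r where p: "p = (w, r)" by (cases p)
    have su: "proj_BD G (ringG D) w \<in> BD G (ringG D)" "DtN G D a m (proj_BD G (ringG D) w) = q0"
        "op_app G w = inv a (r + q0)"
      using DtN_surj[OF q0] unfolding p_def[symmetric] p by simp_all
    have eq: "proj_BD G (ringG D) w = u0"
      using inj_onD[OF DtN_inj _ su(1) u0] su(2) by (simp add: q0_def)
    have wG: "w \<in> Domain G" using pin(1) p by auto
    define N where "N = graph_norm D q0"
    have N: "norm q0 \<le> N" "norm (op_app D q0) \<le> N" "0 \<le> N"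
      by (simp_all add: N_def graph_norm_eq norm_fst_le norm_snd_le)
    define P where "P = norm (w, r)"
    have P: "norm w \<le> P" "norm r \<le> P" by (simp_all add: P_def norm_fst_le norm_snd_le)
    have h: "norm p \<le> C2 * norm (mat2 G D a m p)" using C2 pin(1) by blast
    have "P \<le> C2 * norm (op_app D q0, - inv a q0)" using h unfolding pin(2) by (simp add: P_def p)
    also have "\<dots> \<le> \<bar>C2\<bar> * norm (op_app D q0, - inv a q0)" by (rule mult_right_mono) auto
    also have "\<dots> \<le> \<bar>C2\<bar> * ((L + 1) * N)"
    proof (rule mult_left_mono)
      have "norm (op_app D q0, - inv a q0) \<le> norm (op_app D q0) + norm (- inv a q0)" by (rule norm_Pair_le)
      also have "\<dots> \<le> norm (op_app D q0) + L * norm q0" using L(2)[of q0] by simp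
      also have "\<dots> \<le> N + L * N" using mult_left_mono[OF N(1), of L] L(1) N(2) by linarith
      finally show "norm (op_app D q0, - inv a q0) \<le> (L + 1) * N" by (simp add: algebra_simps)
    qed simp
    finally have PB: "P \<le> \<bar>C2\<bar> * ((L + 1) * N)" .
    have "graph_norm G u0 \<le> graph_norm G w"
      unfolding eq[symmetric] by (rule proj_contr[OF LG LG0 CG0 SG0 wG])
    also have "\<dots> = norm (w, inv a (r + q0))" by (simp add: graph_norm_eq su(3))
    also have "\<dots> \<le> norm w + norm (inv a (r + q0))" by (rule norm_Pair_le)
    also have "\<dots> \<le> P + L * (P + N)"
    proof -
      have "norm (inv a (r + q0)) \<le> L * norm (r + q0)" by (rule L(2))
      also have "\<dots> \<le> L * (P + N)"
        using norm_triangle_ineq[of r q0] P(2) N(1) L(1) by (intro mult_left_mono) auto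
      finally show ?thesis using P(1) by linarith
    qed
    finally show ?thesis unfolding q0_def[symmetric] N_def[symmetric] using arith_bound[OF _ _ N(3) PB] L(1) by auto
  qed
  thus ?thesis by blast
qed

lemma DtN_bij: "bij_betw (DtN G D a m) (BD G (ringG D)) (BD D (ringD G))"
  unfolding bij_betw_def
proof
  show "inj_on (DtN G D a m) (BD G (ringG D))" by (rule DtN_inj)
  show "DtN G D a m ` BD G (ringG D) = BD D (ringD G)"
  proof
    show "DtN G D a m ` BD G (ringG D) \<subseteq> BD D (ringD G)" using DtN_BD BDG_dom by blast
    show "BD D (ringD G) \<subseteq> DtN G D a m ` BD G (ringG D)"
    proof
      fix q0 assume "q0 \<in> BD D (ringD G)"
      from DtN_surj[OF this] show "q0 \<in> DtN G D a m ` BD G (ringG D)" by (metis image_eqI)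
    qed
  qed
qed

lemma DtN_inv_formula:
  assumes q0: "q0 \<in> BD D (ringD G)"
  shows "the_inv_into (BD G (ringG D)) (DtN G D a m) q0 =
          proj_BD G (ringG D)
            (fst (the_inv_into (Domain G \<times> Domain (ringD G)) (mat2 G D a m)
                   (op_app D q0, - inv a q0)))"
  using DtN_surj[OF q0] by (intro the_inv_into_f_eq[OF DtN_inj]) auto

end


theorem theorem2p17:
  fixes G :: "('a::chilbert \<times> 'b::chilbert) set"
    and D :: "('b \<times> 'a) set"
    and a :: "'b \<Rightarrow> 'b"
    and m :: "'a \<Rightarrow> 'a"
  assumes "closed_op G" and "densely_defined G"
    and "closed_op D" and "densely_defined D"
    and "neg_op (adj G) \<subseteq> D"
    and "bounded_clop a" and "coercive a"
    and "bounded_clop m" and "coercive m"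
  shows
    \<comment> \<open>Lambda is a bounded (complex-linear) operator BD(G) -> BD(D) ...\<close>
    "(\<forall>u\<in>BD G (ringG D). \<forall>v\<in>BD G (ringG D). DtN G D a m (u + v) = DtN G D a m u + DtN G D a m v)
     \<and> (\<forall>c. \<forall>u\<in>BD G (ringG D). DtN G D a m (c *\<^sub>C u) = c *\<^sub>C DtN G D a m u)
     \<and> (\<exists>C. \<forall>u\<in>BD G (ringG D). graph_norm D (DtN G D a m u) \<le> C * graph_norm G u)
     \<comment> \<open>... which is invertible (bijective with bounded inverse) ...\<close>
     \<and> bij_betw (DtN G D a m) (BD G (ringG D)) (BD D (ringD G))
     \<and> (\<exists>C. \<forall>u\<in>BD G (ringG D). graph_norm G u \<le> C * graph_norm D (DtN G D a m u))
     \<comment> \<open>the two block operator matrices are invertible ...\<close>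
     \<and> bij_betw (mat1 G D a m) (Domain (ringG D) \<times> Domain D) UNIV
     \<and> (\<exists>C. \<forall>p\<in>Domain (ringG D) \<times> Domain D. norm p \<le> C * norm (mat1 G D a m p))
     \<and> bij_betw (mat2 G D a m) (Domain G \<times> Domain (ringD G)) UNIV
     \<and> (\<exists>C. \<forall>p\<in>Domain G \<times> Domain (ringD G). norm p \<le> C * norm (mat2 G D a m p))
     \<comment> \<open>... and the representation formulas hold\<close>
     \<and> (\<forall>u0\<in>BD G (ringG D). DtN G D a m u0 =
          proj_BD D (ringD G)
            (snd (the_inv_into (Domain (ringG D) \<times> Domain D) (mat1 G D a m)
                   (- m u0, op_app G u0))))
     \<and> (\<forall>q0\<in>BD D (ringD G). the_inv_into (BD G (ringG D)) (DtN G D a m) q0 =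
          proj_BD G (ringG D)
            (fst (the_inv_into (Domain G \<times> Domain (ringD G)) (mat2 G D a m)
                   (op_app D q0, - inv a q0))))"
proof -
  have f1: "\<forall>u\<in>BD G (ringG D). \<forall>v\<in>BD G (ringG D). DtN G D a m (u + v) = DtN G D a m u + DtN G D a m v"
    using DtN_add[OF assms] BDG_dom[OF assms] by blast
  have f2: "\<forall>c. \<forall>u\<in>BD G (ringG D). DtN G D a m (c *\<^sub>C u) = c *\<^sub>C DtN G D a m u"
    using DtN_scale[OF assms] BDG_dom[OF assms] by blast
  have f3: "\<exists>C. \<forall>u\<in>BD G (ringG D). graph_norm D (DtN G D a m u) \<le> C * graph_norm G u"
    by (rule DtN_bound[OF assms])
  have f4: "bij_betw (DtN G D a m) (BD G (ringG D)) (BD D (ringD G))"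
    by (rule DtN_bij[OF assms])
  have f5: "\<exists>C. \<forall>u\<in>BD G (ringG D). graph_norm G u \<le> C * graph_norm D (DtN G D a m u)"
    by (rule DtN_lower[OF assms])
  have f6: "bij_betw (mat1 G D a m) (Domain (ringG D) \<times> Domain D) UNIV"
    using M1[OF assms] by blast
  have f7: "\<exists>C. \<forall>p\<in>Domain (ringG D) \<times> Domain D. norm p \<le> C * norm (mat1 G D a m p)"
    using M1[OF assms] by blast
  have f8: "bij_betw (mat2 G D a m) (Domain G \<times> Domain (ringD G)) UNIV"
    using M2[OF assms] by blast
  have f9: "\<exists>C. \<forall>p\<in>Domain G \<times> Domain (ringD G). norm p \<le> C * norm (mat2 G D a m p)"
    using M2[OF assms] by blast
  have f10: "\<forall>u0\<in>BD G (ringG D). DtN G D a m u0 =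
          proj_BD D (ringD G)
            (snd (the_inv_into (Domain (ringG D) \<times> Domain D) (mat1 G D a m)
                   (- m u0, op_app G u0)))"
    using DtN_formula[OF assms] BDG_dom[OF assms] by blast
  have f11: "\<forall>q0\<in>BD D (ringD G). the_inv_into (BD G (ringG D)) (DtN G D a m) q0 =
          proj_BD G (ringG D)
            (fst (the_inv_into (Domain G \<times> Domain (ringD G)) (mat2 G D a m)
                   (op_app D q0, - inv a q0)))"
    using DtN_inv_formula[OF assms] by blast
  show ?thesis using f1 f2 f3 f4 f5 f6 f7 f8 f9 f10 f11 by (intro conjI) assumption+
qed

end
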